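(* Let $A\in\mathbb{R}^{n\times d}$, let $f:\mathbb{R}^n\to\mathbb{R}\cup\{+\infty\}$ and $g:\mathbb{R}^d\to\mathbb{R}\cup\{+\infty\}$ be closed convex functions, and suppose $f$ is $(1/\gamma)$-smooth for some $\gamma\ge 0$ and $g$ is $\mu$-strongly convex for some $\mu\ge 0$. Let $R=\|A\|_2$ and $F(x,y)=g(x)+\langle y,Ax\rangle-f^*(y)$. Run the DAPD method (described in the context) for $T\ge 1$ iterations with positive step sizes satisfying, for all $t=0,\dots,T-1$, $$\eta_t(1+B_{t-1}\mu)\ge \beta_t,\qquad \eta_t\tau_t\le \frac{1}{R^2},\qquad \frac{\beta_{t+1}}{\tau_{t+1}}\le \frac{\beta_t}{\tau_t}(1+\gamma\tau_t).$$ Define $\hat{x}^T=\frac{1}{B_{T-1}}\sum_{t=0}^{T-1}\beta_t\bar{x}^{t+1}$ and $\hat{y}^T=\frac{1}{B_{T-1}}\sum_{t=0}^{T-1}\beta_t y^{t+1}$. Then for every $x\in\mathbb{R}^d$ and $y\in\mathbb{R}^n$, $$F(\hat{x}^T,y)-F(x,\hat{y}^T)\le \frac{1}{B_{T-1}}\left(\frac{\beta_0}{2\tau_0}\|y^0-y\|_2^2+\frac12\|x^0-x\|_2^2\right).$$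
   Context: $f^*$ denotes the convex conjugate of $f$; $\operatorname{prox}_h(u)=\arg\min_v\{h(v)+\frac12\|v-u\|_2^2\}$. "$f$ is $(1/\gamma)$-smooth with $\gamma\ge0$" is the paper's convention: $\gamma=0$ means $f$ need not be smooth; $\gamma>0$ means $f$ is differentiable with $(1/\gamma)$-Lipschitz gradient. $\mu=0$ means $g$ is merely convex. DAPD method: given initial points $x^0\in\mathbb{R}^d$, $y^0\in\mathbb{R}^n$ and positive step sizes $\{\beta_t\},\{\eta_t\},\{\tau_t\}$, set $B_t=\sum_{k=0}^t\beta_k$ (with $B_{-1}=0$) and for $t=0,1,2,\dots$ compute $\bar{x}^{t+1}=\operatorname{prox}_{\eta_t g}(x^t-\eta_t A^\top y^t)$, $y^{t+1}=\operatorname{prox}_{\tau_t f^*}(y^t+\tau_t A\bar{x}^{t+1})$, $x^{t+1}=\operatorname{prox}_{B_t g}\big(x^0-\sum_{k=0}^t\beta_k A^\top y^{k+1}\big)$. *)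

theory Defs
  imports "HOL-Analysis.Analysis"
begin

text \<open>Extended-real valued functions with values in real union {+infinity}:
  we use type ereal together with the properness assumption below.\<close>

definition proper_fun :: "('a \<Rightarrow> ereal) \<Rightarrow> bool" where
  "proper_fun f \<longleftrightarrow> (\<forall>x. f x \<noteq> -\<infinity>) \<and> (\<exists>x. f x \<noteq> \<infinity>)"

definition closed_fun :: "('a::topological_space \<Rightarrow> ereal) \<Rightarrow> bool" where
  "closed_fun f \<longleftrightarrow> closed {(x, t::real). f x \<le> ereal t}"

definition convex_fun :: "('a::real_vector \<Rightarrow> ereal) \<Rightarrow> bool" where
  "convex_fun f \<longleftrightarrow> (\<forall>x y t. 0 < t \<and> t < 1 \<longrightarrow>
      f (t *\<^sub>R x + (1 - t) *\<^sub>R y) \<le> ereal t * f x + ereal (1 - t) * f y)"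

definition strongly_convex_fun :: "real \<Rightarrow> ('a::real_normed_vector \<Rightarrow> ereal) \<Rightarrow> bool" where
  "strongly_convex_fun \<mu> f \<longleftrightarrow> (\<forall>x y t. 0 < t \<and> t < 1 \<longrightarrow>
      f (t *\<^sub>R x + (1 - t) *\<^sub>R y) \<le> ereal t * f x + ereal (1 - t) * f y
        - ereal (\<mu> / 2 * t * (1 - t) * (norm (x - y))\<^sup>2))"

text \<open>(1/gamma)-smoothness in the paper's convention: no condition if gamma = 0;
  for gamma > 0, f is real-valued, differentiable, with (1/gamma)-Lipschitz gradient.\<close>
definition smooth_fun :: "real \<Rightarrow> ('a::real_inner \<Rightarrow> ereal) \<Rightarrow> bool" where
  "smooth_fun \<gamma> f \<longleftrightarrow> (\<gamma> > 0 \<longrightarrow>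
     (\<forall>x. \<bar>f x\<bar> \<noteq> \<infinity>) \<and>
     (\<exists>G. (\<forall>x. ((\<lambda>z. real_of_ereal (f z)) has_derivative (\<lambda>h. G x \<bullet> h)) (at x)) \<and>
          (\<forall>x y. norm (G x - G y) \<le> (1 / \<gamma>) * norm (x - y))))"

definition conjugate :: "('a::real_inner \<Rightarrow> ereal) \<Rightarrow> 'a \<Rightarrow> ereal" where
  "conjugate f y = (SUP x. ereal (y \<bullet> x) - f x)"

definition prox :: "('a::real_normed_vector \<Rightarrow> ereal) \<Rightarrow> 'a \<Rightarrow> 'a" where
  "prox h u = (SOME v. \<forall>w. h v + ereal ((norm (v - u))\<^sup>2 / 2) \<le> h w + ereal ((norm (w - u))\<^sup>2 / 2))"

definition saddleF :: "(real^'d \<Rightarrow> ereal) \<Rightarrow> (real^'n \<Rightarrow> ereal) \<Rightarrow> real^'d^'n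
     \<Rightarrow> real^'d \<Rightarrow> real^'n \<Rightarrow> ereal" where
  "saddleF g f A x y = g x + ereal (y \<bullet> (A *v x)) - conjugate f y"

end

theory Submission
  imports Defs
begin

definition lsc_seq :: "('a::topological_space \<Rightarrow> ereal) \<Rightarrow> bool" where
  "lsc_seq h \<longleftrightarrow> (\<forall>X x t. (X \<longlonglongrightarrow> x) \<and> (\<forall>n. h (X n) \<le> ereal t) \<longrightarrow> h x \<le> ereal t)"

lemma closed_fun_lsc:
  fixes h :: "'a::first_countable_topology \<Rightarrow> ereal"
  assumes "closed_fun h" shows "lsc_seq h"
  unfolding lsc_seq_def
proof (intro allI impI)
  fix X x t assume a: "(X \<longlonglongrightarrow> x) \<and> (\<forall>n. h (X n) \<le> ereal t)"
  let ?S = "{(x, t::real). h x \<le> ereal t}"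
  have c: "closed ?S" using assms unfolding closed_fun_def .
  have "((\<lambda>n. (X n, t)) \<longlonglongrightarrow> (x, t))" using a by (intro tendsto_Pair) auto
  moreover have "\<forall>n. (X n, t) \<in> ?S" using a by auto
  ultimately have "(x, t) \<in> ?S"
    using closed_sequential_limits[THEN iffD1, OF c, rule_format, of "\<lambda>n. (X n, t)" "(x,t)"] by blast
  then show "h x \<le> ereal t" by simp
qed

lemma ereal_le_eps:
  fixes a :: ereal
  assumes "\<And>N::nat. a \<le> ereal (M + 1 / (real N + 1))"
  shows "a \<le> ereal M"
proof -
  have "a \<noteq> \<infinity>" using assms[of 0] by auto
  show ?thesis
  proof (cases a)
    case (real r)
    have "r \<le> M"
    proof (rule ccontr)
      assume "\<not> r \<le> M"
      then obtain n where n: "inverse (real (Suc n)) < r - M" using reals_Archimedean[of "r - M"] by auto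
      have "r \<le> M + 1 / (real n + 1)" using assms[of n] real by simp
      moreover have "inverse (real (Suc n)) = 1 / (real n + 1)" by (simp add: inverse_eq_divide)
      ultimately show False using n by linarith
    qed
    then show ?thesis using real by simp
  qed (use \<open>a \<noteq> \<infinity>\<close> in auto)
qed

lemma lsc_tail:
  assumes "lsc_seq h" "X \<longlonglongrightarrow> x" "\<And>n. n \<ge> N \<Longrightarrow> h (X n) \<le> ereal t"
  shows "h x \<le> ereal t"
proof -
  have "(\<lambda>n. X (n + N)) \<longlonglongrightarrow> x" using assms(2) by (rule LIMSEQ_ignore_initial_segment)
  moreover have "\<forall>n. h (X (n + N)) \<le> ereal t" using assms(3) by simp
  ultimately show ?thesis using assms(1) unfolding lsc_seq_def by blast
qed

lemma lsc_bounded_below_cball: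
  fixes h :: "'a::euclidean_space \<Rightarrow> ereal"
  assumes np: "\<And>x. h x \<noteq> -\<infinity>" and l: "lsc_seq h"
  shows "\<exists>m. \<forall>w\<in>cball x0 1. ereal m \<le> h w"
proof (rule ccontr)
  assume "\<not> ?thesis"
  then have *: "\<forall>m. \<exists>w\<in>cball x0 1. h w < ereal m" by (auto simp: not_le)
  have "\<forall>n::nat. \<exists>w. w \<in> cball x0 1 \<and> h w < ereal (- real n)"
  proof
    fix n :: nat show "\<exists>w. w \<in> cball x0 1 \<and> h w < ereal (- real n)" using *[rule_format, of "- real n"] by blast
  qed
  then obtain X where X0: "\<forall>n. X n \<in> cball x0 1 \<and> h (X n) < ereal (- real n)" by (rule choice[THEN exE])
  then have X: "\<And>n. X n \<in> cball x0 1" "\<And>n. h (X n) < ereal (- real n)" by auto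
  have "range X \<subseteq> cball x0 1" using X(1) by auto
  then have "bounded (range X)" using bounded_cball bounded_subset by blast
  then obtain xl r where r: "strict_mono r" "(X \<circ> r) \<longlonglongrightarrow> xl"
    using bounded_imp_convergent_subsequence by blast
  have "h xl \<le> ereal (- real k)" for k
  proof (rule lsc_tail[OF l r(2), of k])
    fix n assume "n \<ge> k"
    then have "r n \<ge> k" using seq_suble[OF r(1), of n] by linarith
    then have "ereal (- real (r n)) \<le> ereal (- real k)" by simp
    then show "h ((X \<circ> r) n) \<le> ereal (- real k)"
      using X(2)[of "r n"] unfolding o_def by (meson less_imp_le order.trans)
  qed
  moreover obtain z where z: "h xl = ereal z" using np[of xl] calculation[of 0]
    by (cases "h xl") auto
  ultimately have zk: "z \<le> - real k" for k by (metis ereal_less_eq(3))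
  obtain k :: nat where "real k > - z" using reals_Archimedean2 by blast
  with zk[of k] show False by linarith
qed

lemma convex_funD_real:
  assumes "convex_fun h" "h a = ereal ha" "h b = ereal hb" "0 < t" "t < 1" "\<And>x. h x \<noteq> -\<infinity>"
  shows "\<exists>z. h (t *\<^sub>R a + (1 - t) *\<^sub>R b) = ereal z \<and> z \<le> t * ha + (1 - t) * hb"
proof -
  have "h (t *\<^sub>R a + (1 - t) *\<^sub>R b) \<le> ereal t * h a + ereal (1 - t) * h b"
    using assms(1,4,5) unfolding convex_fun_def by blast
  then have le: "h (t *\<^sub>R a + (1 - t) *\<^sub>R b) \<le> ereal (t * ha + (1 - t) * hb)"
    using assms(2,3) by simp
  show ?thesis
  proof (cases "h (t *\<^sub>R a + (1 - t) *\<^sub>R b)")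
    case (real r) then show ?thesis using le by auto
  next
    case PInf then show ?thesis using le by auto
  next
    case MInf then show ?thesis using assms(6) by auto
  qed
qed

lemma linear_lower_bound:
  fixes h :: "'a::euclidean_space \<Rightarrow> ereal"
  assumes cv: "convex_fun h" and np: "\<And>x. h x \<noteq> -\<infinity>" and h0: "h x0 = ereal h0"
    and m: "\<forall>w\<in>cball x0 1. ereal m \<le> h w"
  shows "ereal (m - (h0 - m) * norm (w - x0)) \<le> h w"
proof -
  have "ereal m \<le> h x0" using m by simp
  then have mh0: "m \<le> h0" using h0 by simp
  show ?thesis
  proof (cases "norm (w - x0) \<le> 1")
    case True
    then have "ereal m \<le> h w" using m by (simp add: dist_norm norm_minus_commute)
    moreover have "m - (h0 - m) * norm (w - x0) \<le> m" using mh0 by simp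
    ultimately show ?thesis by (meson ereal_less_eq(3) order.trans)
  next
    case False
    define r where "r = norm (w - x0)"
    have r1: "r > 1" using False r_def by simp
    show ?thesis
    proof (cases "h w")
      case PInf then show ?thesis by simp
    next
      case MInf then show ?thesis using np by auto
    next
      case (real hw)
      define z where "z = (1/r) *\<^sub>R w + (1 - 1/r) *\<^sub>R x0"
      have "z - x0 = (1/r) *\<^sub>R (w - x0)" unfolding z_def by (simp add: algebra_simps)
      then have "norm (z - x0) = 1" using r1 r_def by (auto simp: norm_minus_commute)
      then have zin: "z \<in> cball x0 1" by (simp add: dist_norm norm_minus_commute)
      obtain hz where hz: "h z = ereal hz" "hz \<le> (1/r) * hw + (1 - 1/r) * h0"
        using convex_funD_real[OF cv real h0, of "1/r"] r1 np unfolding z_def by auto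
      have "m \<le> hz" using m zin hz by force
      then have "m \<le> (1/r) * hw + (1 - 1/r) * h0" using hz by linarith
      then have "r * m \<le> hw + (r - 1) * h0" using r1 by (simp add: field_simps)
      then have "m - (h0 - m) * r \<le> hw" using mh0 r1 by (simp add: algebra_simps)
      then show ?thesis using real r_def by simp
    qed
  qed
qed

lemma ereal_add_le_split:
  assumes "a + ereal b \<le> ereal C" shows "a \<le> ereal (C - b)"
  using assms by (cases a) auto

lemma sublevel_closed:
  fixes h :: "'a::euclidean_space \<Rightarrow> ereal"
  assumes l: "lsc_seq h" and X: "X \<longlonglongrightarrow> p"
    and le: "\<And>n. h (X n) + ereal ((norm (X n - u))\<^sup>2 / 2) \<le> ereal C"
  shows "h p + ereal ((norm (p - u))\<^sup>2 / 2) \<le> ereal C"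
proof -
  define L where "L = C - (norm (p - u))\<^sup>2 / 2"
  have lim: "(\<lambda>n. C - (norm (X n - u))\<^sup>2 / 2) \<longlonglongrightarrow> L"
    unfolding L_def by (auto intro!: tendsto_intros X)
  have "h p \<le> ereal (L + 1 / (real N + 1))" for N
  proof -
    have "eventually (\<lambda>n. C - (norm (X n - u))\<^sup>2 / 2 < L + 1 / (real N + 1)) sequentially"
      using lim by (rule order_tendstoD) simp
    then obtain K where K: "\<And>n. n \<ge> K \<Longrightarrow> C - (norm (X n - u))\<^sup>2 / 2 < L + 1 / (real N + 1)"
      unfolding eventually_sequentially by blast
    show ?thesis
    proof (rule lsc_tail[OF l X, of K])
      fix n assume "n \<ge> K"
      have "h (X n) \<le> ereal (C - (norm (X n - u))\<^sup>2 / 2)" using le[of n] by (rule ereal_add_le_split)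
      also have "\<dots> \<le> ereal (L + 1 / (real N + 1))" using K[OF \<open>n \<ge> K\<close>] by simp
      finally show "h (X n) \<le> ereal (L + 1 / (real N + 1))" .
    qed
  qed
  then have "h p \<le> ereal L" by (rule ereal_le_eps)
  then show ?thesis unfolding L_def by (cases "h p") auto
qed

lemma quad_bound:
  fixes s K c :: real
  assumes "s \<ge> 0" "c \<ge> 0" "s\<^sup>2 \<le> 2 * K + 2 * c * s"
  shows "s \<le> 1 + 2 * \<bar>K\<bar> + 2 * c"
proof (rule ccontr)
  assume "\<not> ?thesis"
  then have s1: "s > 1 + 2 * \<bar>K\<bar> + 2 * c" by simp
  then have "s * s > s * (1 + 2 * \<bar>K\<bar> + 2 * c)" using assms(1,2) by (intro mult_strict_left_mono) auto
  moreover have "1 * (2 * \<bar>K\<bar>) \<le> s * (2 * \<bar>K\<bar>)" by (rule mult_right_mono) (use s1 assms(2) abs_ge_zero[of K] in linarith, simp)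
  moreover have "s \<ge> 0" using assms by simp
  ultimately have "s * s > 2 * K + 2 * c * s" by (simp add: algebra_simps)
  with assms(3) show False by (simp add: power2_eq_square)
qed

lemma prox_exists:
  fixes h :: "'a::euclidean_space \<Rightarrow> ereal"
  assumes pr: "proper_fun h" and l: "lsc_seq h" and cv: "convex_fun h"
  shows "\<exists>p. \<forall>w. h p + ereal ((norm (p - u))\<^sup>2 / 2) \<le> h w + ereal ((norm (w - u))\<^sup>2 / 2)"
proof -
  have np: "\<And>x. h x \<noteq> -\<infinity>" using pr unfolding proper_fun_def by auto
  obtain x0 where "h x0 \<noteq> \<infinity>" using pr unfolding proper_fun_def by auto
  then obtain h0 where h0: "h x0 = ereal h0" using np[of x0] by (cases "h x0") auto
  obtain m where m: "\<forall>w\<in>cball x0 1. ereal m \<le> h w" using lsc_bounded_below_cball[OF np l] by blast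
  have "ereal m \<le> h x0" using m by simp
  then have mh0: "m \<le> h0" using h0 by simp
  define c where "c = h0 - m"
  have c0: "c \<ge> 0" using mh0 c_def by simp
  have lb: "ereal (m - c * norm (w - x0)) \<le> h w" for w
    using linear_lower_bound[OF cv np h0 m] c_def by simp
  define \<Phi> where "\<Phi> w = h w + ereal ((norm (w - u))\<^sup>2 / 2)" for w
  have key: "m - c * norm (u - x0) - c * norm (w - u) + (norm (w - u))\<^sup>2 / 2 \<le> r"
    if "\<Phi> w \<le> ereal r" for w r
  proof -
    have "ereal (m - c * norm (w - x0) + (norm (w - u))\<^sup>2 / 2) \<le> \<Phi> w"
      unfolding \<Phi>_def using lb[of w] by (metis add_right_mono plus_ereal.simps(1))
    then have "m - c * norm (w - x0) + (norm (w - u))\<^sup>2 / 2 \<le> r" using that by (meson ereal_less_eq(3) order.trans)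
    moreover have "norm (w - x0) \<le> norm (w - u) + norm (u - x0)"
      by (metis diff_add_cancel norm_triangle_ineq add.commute diff_add_eq)
    then have "c * norm (w - x0) \<le> c * norm (w - u) + c * norm (u - x0)"
      using c0 by (metis distrib_left mult_left_mono)
    ultimately show ?thesis by linarith
  qed
  define L0 where "L0 = m - c * norm (u - x0) - c\<^sup>2 / 2"
  have Phi_lb: "ereal L0 \<le> \<Phi> w" for w
  proof (cases "\<Phi> w")
    case (real r)
    then have "m - c * norm (u - x0) - c * norm (w - u) + (norm (w - u))\<^sup>2 / 2 \<le> r" using key by simp
    moreover have "(norm (w - u) - c)\<^sup>2 \<ge> 0" by simp
    ultimately have "L0 \<le> r" unfolding L0_def by (simp add: power2_eq_square algebra_simps)
    then show ?thesis using real by simp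
  next
    case MInf then show ?thesis unfolding \<Phi>_def using np by auto
  qed simp
  have bnd: "norm (w - u) \<le> 1 + 2 * \<bar>r - m + c * norm (u - x0)\<bar> + 2 * c" if "\<Phi> w \<le> ereal r" for w r
    using key[OF that] c0
    by (intro quad_bound) (auto simp: algebra_simps)
  define M where "M = (INF w. \<Phi> w)"
  have "M \<le> \<Phi> x0" unfolding M_def by (rule INF_lower) simp
  moreover have "ereal L0 \<le> M" unfolding M_def by (rule INF_greatest) (use Phi_lb in auto)
  ultimately obtain M' where M': "M = ereal M'" unfolding \<Phi>_def h0 by (cases M) auto
  have "\<exists>w. \<Phi> w \<le> ereal (M' + 1 / (real n + 1))" for n :: nat
  proof (rule ccontr)
    assume "\<not> ?thesis"
    then have "\<forall>w. ereal (M' + 1 / (real n + 1)) \<le> \<Phi> w" by (meson linorder_not_le less_imp_le)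
    then have "ereal (M' + 1 / (real n + 1)) \<le> M" unfolding M_def by (intro INF_greatest) blast
    then show False using M' by simp
  qed
  then have "\<forall>n. \<exists>w. \<Phi> w \<le> ereal (M' + 1 / (real n + 1))" by blast
  then obtain X where X: "\<forall>n. \<Phi> (X n) \<le> ereal (M' + 1 / (real n + 1))" by (rule choice[THEN exE])
  have X1: "\<Phi> (X n) \<le> ereal (M' + 1)" for n
  proof -
    have "1 / (real n + 1) \<le> 1" by simp
    then show ?thesis using X[rule_format, of n] by (meson add_left_mono ereal_less_eq(3) order.trans)
  qed
  define BB where "BB = norm u + 1 + 2 * \<bar>M' + 1 - m + c * norm (u - x0)\<bar> + 2 * c"
  have "norm (X n) \<le> BB" for n
  proof -
    have "norm (X n) \<le> norm u + norm (X n - u)" by (metis add_diff_cancel_left' norm_triangle_ineq add.commute diff_add_cancel)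
    then show ?thesis using bnd[OF X1[of n]] unfolding BB_def by linarith
  qed
  then have "bounded (range X)" unfolding bounded_iff by blast
  then obtain p r where r: "strict_mono r" "(X \<circ> r) \<longlonglongrightarrow> p"
    using bounded_imp_convergent_subsequence by blast
  have "\<Phi> p \<le> ereal (M' + 1 / (real N + 1))" for N
  proof -
    have lim: "(\<lambda>n. (X \<circ> r) (n + N)) \<longlonglongrightarrow> p" using r(2) by (rule LIMSEQ_ignore_initial_segment)
    have "h ((X \<circ> r) (n + N)) + ereal ((norm ((X \<circ> r) (n + N) - u))\<^sup>2 / 2) \<le> ereal (M' + 1 / (real N + 1))" for n
    proof -
      have "r (n + N) \<ge> N" using seq_suble[OF r(1), of "n + N"] by linarith
      then have "1 / (real (r (n + N)) + 1) \<le> 1 / (real N + 1)" by (intro divide_left_mono) auto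
      then show ?thesis using X[rule_format, of "r (n + N)"] unfolding \<Phi>_def o_def
        by (meson add_left_mono ereal_less_eq(3) order.trans)
    qed
    then show ?thesis unfolding \<Phi>_def by (rule sublevel_closed[OF l lim])
  qed
  then have "\<Phi> p \<le> ereal M'" by (rule ereal_le_eps)
  then have "\<Phi> p \<le> \<Phi> w" for w using M' unfolding M_def by (metis INF_lower UNIV_I order.trans)
  then show ?thesis unfolding \<Phi>_def by blast
qed

lemma prox_min:
  fixes h :: "'a::euclidean_space \<Rightarrow> ereal"
  assumes "proper_fun h" "lsc_seq h" "convex_fun h"
  shows "h (prox h u) + ereal ((norm (prox h u - u))\<^sup>2 / 2) \<le> h w + ereal ((norm (w - u))\<^sup>2 / 2)"
proof -
  have "\<forall>w. h (prox h u) + ereal ((norm (prox h u - u))\<^sup>2 / 2) \<le> h w + ereal ((norm (w - u))\<^sup>2 / 2)"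
    unfolding prox_def by (rule someI_ex[OF prox_exists[OF assms]])
  then show ?thesis by blast
qed

lemma prox_finite:
  fixes h :: "'a::euclidean_space \<Rightarrow> ereal"
  assumes "proper_fun h" "lsc_seq h" "convex_fun h"
  shows "h (prox h u) \<noteq> \<infinity>"
proof
  assume inf: "h (prox h u) = \<infinity>"
  obtain x0 where x0: "h x0 \<noteq> \<infinity>" using assms(1) unfolding proper_fun_def by auto
  have "h (prox h u) + ereal ((norm (prox h u - u))\<^sup>2 / 2) \<le> h x0 + ereal ((norm (x0 - u))\<^sup>2 / 2)"
    by (rule prox_min[OF assms])
  then show False using inf x0 by simp
qed

lemma norm_comb:
  fixes x y :: "'a::real_inner"
  shows "(norm (t *\<^sub>R x + (1 - t) *\<^sub>R y))\<^sup>2 = t * (norm x)\<^sup>2 + (1 - t) * (norm y)\<^sup>2 - t * (1 - t) * (norm (x - y))\<^sup>2"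
proof -
  have e1: "(norm (t *\<^sub>R x + (1 - t) *\<^sub>R y))\<^sup>2 = t*t * (x \<bullet> x) + 2 * (t * (1 - t)) * (x \<bullet> y) + (1-t)*(1-t) * (y \<bullet> y)"
    unfolding power2_norm_eq_inner by (simp add: inner_add_left inner_add_right inner_commute)
  have e2: "(norm (x - y))\<^sup>2 = x \<bullet> x - 2 * (x \<bullet> y) + y \<bullet> y"
    unfolding power2_norm_eq_inner by (simp add: inner_diff_left inner_diff_right inner_commute)
  show ?thesis unfolding e1 e2 power2_norm_eq_inner by (simp add: algebra_simps)
qed

lemma sc_real:
  assumes sc: "strongly_convex_fun \<sigma> h" and np: "\<And>x. h x \<noteq> -\<infinity>"
    and ha: "h a = ereal xa" and hb: "h b = ereal xb" and t: "0 < t" "t < 1"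
  shows "\<exists>z. h (t *\<^sub>R a + (1 - t) *\<^sub>R b) = ereal z \<and>
           z \<le> t * xa + (1 - t) * xb - \<sigma> / 2 * t * (1 - t) * (norm (a - b))\<^sup>2"
proof -
  have "h (t *\<^sub>R a + (1 - t) *\<^sub>R b) \<le> ereal t * h a + ereal (1 - t) * h b
        - ereal (\<sigma> / 2 * t * (1 - t) * (norm (a - b))\<^sup>2)"
    using sc t unfolding strongly_convex_fun_def by blast
  then have le: "h (t *\<^sub>R a + (1 - t) *\<^sub>R b) \<le> ereal (t * xa + (1 - t) * xb - \<sigma> / 2 * t * (1 - t) * (norm (a - b))\<^sup>2)"
    using ha hb by simp
  show ?thesis
  proof (cases "h (t *\<^sub>R a + (1 - t) *\<^sub>R b)")
    case (real r) then show ?thesis using le by auto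
  next
    case PInf then show ?thesis using le by auto
  next
    case MInf then show ?thesis using np by auto
  qed
qed

lemma ereal_inf_comb:
  assumes "h x = \<infinity> \<or> h y = \<infinity>" "h x \<noteq> -\<infinity>" "h y \<noteq> -\<infinity>" "0 < t" "t < 1"
  shows "ereal t * h x + ereal (1 - t) * h y = \<infinity>"
  using assms by (cases "h x"; cases "h y") (auto simp: ereal_mult_infty)

lemma sc_convex:
  assumes "\<sigma> \<ge> 0" "strongly_convex_fun \<sigma> h" "\<And>x. h x \<noteq> -\<infinity>"
  shows "convex_fun h"
  unfolding convex_fun_def
proof (intro allI impI)
  fix x y and t :: real assume t: "0 < t \<and> t < 1"
  show "h (t *\<^sub>R x + (1 - t) *\<^sub>R y) \<le> ereal t * h x + ereal (1 - t) * h y"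
  proof (cases "h x = \<infinity> \<or> h y = \<infinity>")
    case True
    then have eq: "ereal t * h x + ereal (1 - t) * h y = \<infinity>"
      using ereal_inf_comb[of h x y t] assms(3) t by blast
    show ?thesis unfolding eq by simp
  next
    case False
    then obtain a b where ab: "h x = ereal a" "h y = ereal b" using assms(3)[of x] assms(3)[of y]
      by (cases "h x"; cases "h y") auto
    obtain z where z: "h (t *\<^sub>R x + (1 - t) *\<^sub>R y) = ereal z"
      "z \<le> t * a + (1 - t) * b - \<sigma> / 2 * t * (1 - t) * (norm (x - y))\<^sup>2"
      using sc_real[OF assms(2,3) ab] t by blast
    have "\<sigma> / 2 * t * (1 - t) * (norm (x - y))\<^sup>2 \<ge> 0" using assms(1) t by simp
    then show ?thesis using z ab by simp
  qed
qed

lemma sc_scale: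
  fixes h :: "'a::real_normed_vector \<Rightarrow> ereal"
  assumes c: "c > 0" and sc: "strongly_convex_fun \<sigma> h" and np: "\<And>x. h x \<noteq> -\<infinity>"
  shows "strongly_convex_fun (c * \<sigma>) (\<lambda>w. ereal c * h w)"
  unfolding strongly_convex_fun_def
proof (intro allI impI)
  fix x y :: 'a and t :: real assume t: "0 < t \<and> t < 1"
  let ?s = "c * \<sigma> / 2 * t * (1 - t) * (norm (x - y))\<^sup>2"
  have np': "ereal c * h z \<noteq> -\<infinity>" for z using np[of z] c by (cases "h z") auto
  show "ereal c * h (t *\<^sub>R x + (1 - t) *\<^sub>R y) \<le> ereal t * (ereal c * h x) + ereal (1 - t) * (ereal c * h y) - ereal ?s"
  proof (cases "h x = \<infinity> \<or> h y = \<infinity>")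
    case True
    then have "ereal c * h x = \<infinity> \<or> ereal c * h y = \<infinity>" using c by auto
    then have eq: "ereal t * (ereal c * h x) + ereal (1 - t) * (ereal c * h y) = \<infinity>"
      using ereal_inf_comb[of "\<lambda>w. ereal c * h w" x y t] np' t by blast
    show ?thesis unfolding eq by simp
  next
    case False
    then obtain a b where ab: "h x = ereal a" "h y = ereal b" using np[of x] np[of y]
      by (cases "h x"; cases "h y") auto
    obtain z where z: "h (t *\<^sub>R x + (1 - t) *\<^sub>R y) = ereal z"
      "z \<le> t * a + (1 - t) * b - \<sigma> / 2 * t * (1 - t) * (norm (x - y))\<^sup>2"
      using sc_real[OF sc np ab] t by blast
    have "c * z \<le> c * (t * a + (1 - t) * b - \<sigma> / 2 * t * (1 - t) * (norm (x - y))\<^sup>2)"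
      using z(2) c by (intro mult_left_mono) auto
    then show ?thesis using z ab by (simp add: algebra_simps)
  qed
qed

lemma proper_scale:
  assumes "c > 0" "proper_fun h" shows "proper_fun (\<lambda>w. ereal c * h w)"
proof -
  obtain x where x: "h x \<noteq> \<infinity>" using assms(2) unfolding proper_fun_def by auto
  have "ereal c * h z \<noteq> -\<infinity>" for z using assms unfolding proper_fun_def
    by (cases "h z") auto
  then have "\<forall>z. ereal c * h z \<noteq> -\<infinity>" by blast
  moreover have "ereal c * h x \<noteq> \<infinity>" using x assms unfolding proper_fun_def
    by (cases "h x") auto
  ultimately show ?thesis unfolding proper_fun_def by blast
qed

lemma lsc_scale:
  assumes "c > 0" "lsc_seq h" shows "lsc_seq (\<lambda>w. ereal c * h w)"
  unfolding lsc_seq_def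
proof (intro allI impI)
  fix X x t assume a: "(X \<longlonglongrightarrow> x) \<and> (\<forall>n. ereal c * h (X n) \<le> ereal t)"
  have "h (X n) \<le> ereal (t / c)" for n
  proof -
    have "ereal c * h (X n) \<le> ereal t" using a by blast
    then show ?thesis using assms(1) by (cases "h (X n)") (auto simp: field_simps)
  qed
  then have "h x \<le> ereal (t / c)" using a assms(2) unfolding lsc_seq_def by blast
  then show "ereal c * h x \<le> ereal t" using assms(1) by (cases "h x") (auto simp: field_simps)
qed

lemma prox_ineq:
  fixes h :: "'a::real_inner \<Rightarrow> ereal"
  assumes sc: "strongly_convex_fun \<sigma> h" and np: "\<And>x. h x \<noteq> -\<infinity>"
    and minp: "\<And>w. h p + ereal ((norm (p - u))\<^sup>2 / 2) \<le> h w + ereal ((norm (w - u))\<^sup>2 / 2)"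
    and hp: "h p = ereal a" and hw: "h w = ereal b"
  shows "a + (norm (p - u))\<^sup>2 / 2 + (1 + \<sigma>) / 2 * (norm (w - p))\<^sup>2 \<le> b + (norm (w - u))\<^sup>2 / 2"
proof -
  define k where "k = (1 + \<sigma>) / 2 * (norm (w - p))\<^sup>2"
  define Pp where "Pp = a + (norm (p - u))\<^sup>2 / 2"
  define Pw where "Pw = b + (norm (w - u))\<^sup>2 / 2"
  have step: "Pp \<le> Pw - k * (1 - t)" if t: "0 < t" "t < 1" for t
  proof -
    define z where "z = t *\<^sub>R w + (1 - t) *\<^sub>R p"
    obtain hz where hz: "h z = ereal hz" "hz \<le> t * b + (1 - t) * a - \<sigma> / 2 * t * (1 - t) * (norm (w - p))\<^sup>2"
      using sc_real[OF sc np hw hp t] unfolding z_def by blast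
    have "h p + ereal ((norm (p - u))\<^sup>2 / 2) \<le> h z + ereal ((norm (z - u))\<^sup>2 / 2)" by (rule minp)
    then have m: "Pp \<le> hz + (norm (z - u))\<^sup>2 / 2" using hp hz unfolding Pp_def by simp
    have "z - u = t *\<^sub>R (w - u) + (1 - t) *\<^sub>R (p - u)" unfolding z_def by (simp add: algebra_simps)
    then have nz: "(norm (z - u))\<^sup>2 = t * (norm (w - u))\<^sup>2 + (1 - t) * (norm (p - u))\<^sup>2 - t * (1 - t) * (norm (w - p))\<^sup>2"
      using norm_comb[of t "w - u" "p - u"] by simp
    define W where "W = (norm (w - u))\<^sup>2"
    define P where "P = (norm (p - u))\<^sup>2"
    define D where "D = (norm (w - p))\<^sup>2"
    have "Pp \<le> t * b + (1 - t) * a - \<sigma> / 2 * t * (1 - t) * D + (t * W + (1 - t) * P - t * (1 - t) * D) / 2"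
      using order.trans[OF m add_right_mono[OF hz(2)]] unfolding nz W_def P_def D_def .
    also have "\<dots> = t * Pw + (1 - t) * Pp - t * (1 - t) * k"
      unfolding Pp_def Pw_def k_def W_def[symmetric] P_def[symmetric] D_def[symmetric] by (simp add: field_simps)
    finally have "Pp \<le> t * Pw + (1 - t) * Pp - t * (1 - t) * k" .
    then have "t * Pp \<le> t * (Pw - k * (1 - t))" by (simp add: algebra_simps)
    then show ?thesis using t by simp
  qed
  have lim: "((\<lambda>t. Pw - k * (1 - t)) \<longlongrightarrow> Pw - k * (1 - 0)) (at_right 0)"
    by (intro tendsto_intros)
  have ev: "eventually (\<lambda>t. Pp \<le> Pw - k * (1 - t)) (at_right (0::real))"
    unfolding eventually_at_right_field using step by (intro exI[of _ 1]) auto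
  have "Pp \<le> Pw - k * (1 - 0)"
    by (rule tendsto_lowerbound[OF lim ev]) simp
  then show ?thesis unfolding Pp_def Pw_def k_def by simp
qed

lemma comb_mono:
  fixes a b A B :: ereal
  assumes "a \<le> A" "b \<le> B" "0 < t" "t < 1"
  shows "ereal t * a + ereal (1 - t) * b - ereal s \<le> ereal t * A + ereal (1 - t) * B - ereal s"
proof -
  have "ereal t * a \<le> ereal t * A" using assms by (intro ereal_mult_left_mono) auto
  moreover have "ereal (1 - t) * b \<le> ereal (1 - t) * B" using assms by (intro ereal_mult_left_mono) auto
  ultimately have "ereal t * a + ereal (1 - t) * b \<le> ereal t * A + ereal (1 - t) * B" by (rule add_mono)
  then show ?thesis by (rule ereal_minus_mono) simp
qed

lemma conj_upper:
  "ereal (y \<bullet> x) - f x \<le> conjugate f y"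
  unfolding conjugate_def by (rule SUP_upper) simp

lemma conj_not_minf:
  assumes "proper_fun f" shows "conjugate f y \<noteq> -\<infinity>"
proof -
  obtain x0 where "f x0 \<noteq> \<infinity>" "f x0 \<noteq> -\<infinity>" using assms unfolding proper_fun_def by auto
  then obtain a where a: "f x0 = ereal a" by (cases "f x0") auto
  have "ereal (y \<bullet> x0 - a) \<le> conjugate f y" using conj_upper[of y x0 f] a by simp
  then show ?thesis by auto
qed

lemma conj_lsc: assumes pr: "proper_fun f" shows "lsc_seq (conjugate f)"
  unfolding lsc_seq_def
proof (intro allI impI)
  fix X y t assume a: "(X \<longlonglongrightarrow> y) \<and> (\<forall>n. conjugate f (X n) \<le> ereal t)"
  show "conjugate f y \<le> ereal t"
    unfolding conjugate_def
  proof (rule SUP_least)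
    fix x assume "x \<in> (UNIV :: 'a set)"
    show "ereal (y \<bullet> x) - f x \<le> ereal t"
    proof (cases "f x")
      case (real r)
      have "X n \<bullet> x - r \<le> t" for n
      proof -
        have "ereal (X n \<bullet> x) - f x \<le> ereal t" using conj_upper[of "X n" x f] a by (meson order.trans)
        then show ?thesis using real by simp
      qed
      moreover have "(\<lambda>n. X n \<bullet> x - r) \<longlonglongrightarrow> y \<bullet> x - r" using a by (auto intro!: tendsto_intros)
      ultimately have "y \<bullet> x - r \<le> t" by (meson LIMSEQ_le_const2)
      then show ?thesis using real by simp
    qed (use pr in \<open>simp_all add: proper_fun_def\<close>)
  qed
qed

lemma conj_finite_point:
  fixes f :: "'a::euclidean_space \<Rightarrow> ereal"
  assumes pr: "proper_fun f" and cl: "closed_fun f" and cv: "convex_fun f"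
  shows "\<exists>y. conjugate f y \<noteq> \<infinity>"
proof -
  have np: "\<And>x. f x \<noteq> -\<infinity>" using pr unfolding proper_fun_def by auto
  obtain x0 where "f x0 \<noteq> \<infinity>" using pr unfolding proper_fun_def by auto
  then obtain h0 where h0: "f x0 = ereal h0" using np[of x0] by (cases "f x0") auto
  define E where "E = {(x, t::real). f x \<le> ereal t}"
  have clE: "closed E" using cl unfolding closed_fun_def E_def .
  have cvE: "convex E"
  proof (rule convexI)
    fix p q :: "'a \<times> real" and u v :: real
    assume p: "p \<in> E" and q: "q \<in> E" and uv0: "0 \<le> u" "0 \<le> v" "u + v = 1"
    then have uv: "0 \<le> u \<and> 0 \<le> v \<and> u + v = 1" by simp
    obtain x1 t1 where p': "p = (x1, t1)" "f x1 \<le> ereal t1" using p unfolding E_def by auto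
    obtain x2 t2 where q': "q = (x2, t2)" "f x2 \<le> ereal t2" using q unfolding E_def by auto
    show "u *\<^sub>R p + v *\<^sub>R q \<in> E"
    proof (cases "u = 0 \<or> v = 0")
      case True
      then show ?thesis using uv p q by auto
    next
      case False
      then have u: "0 < u" "u < 1" and v: "v = 1 - u" using uv by auto
      have "f (u *\<^sub>R x1 + (1 - u) *\<^sub>R x2) \<le> ereal u * f x1 + ereal (1 - u) * f x2"
        using cv u unfolding convex_fun_def by blast
      also have "\<dots> = ereal u * f x1 + ereal (1 - u) * f x2 - ereal 0" by simp
      also have "\<dots> \<le> ereal u * ereal t1 + ereal (1 - u) * ereal t2 - ereal 0"
        by (rule comb_mono[OF p'(2) q'(2) u])
      finally show ?thesis using p'(1) q'(1) v unfolding E_def by simp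
    qed
  qed
  have notin: "(x0, h0 - 1) \<notin> E" using h0 unfolding E_def by simp
  obtain ab b where sep: "inner ab (x0, h0 - 1) < b" "\<forall>p\<in>E. inner ab p > b"
    using separating_hyperplane_closed_point[OF cvE clE notin] by blast
  obtain a \<alpha> where ab: "ab = (a, \<alpha>)" by (cases ab)
  have s1: "a \<bullet> x0 + \<alpha> * (h0 - 1) < b" using sep(1) ab by simp
  have "(x0, h0) \<in> E" using h0 unfolding E_def by simp
  then have s2: "a \<bullet> x0 + \<alpha> * h0 > b" using sep(2) ab by auto
  have \<alpha>: "\<alpha> > 0" using s1 s2 by (simp add: algebra_simps)
  have "conjugate f (- (1 / \<alpha>) *\<^sub>R a) \<le> ereal (- b / \<alpha>)"
    unfolding conjugate_def
  proof (rule SUP_least)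
    fix x assume "x \<in> (UNIV :: 'a set)"
    show "ereal ((- (1 / \<alpha>) *\<^sub>R a) \<bullet> x) - f x \<le> ereal (- b / \<alpha>)"
    proof (cases "f x")
      case (real r)
      then have "(x, r) \<in> E" unfolding E_def by simp
      then have "a \<bullet> x + \<alpha> * r > b" using sep(2) ab by auto
      then have "- (a \<bullet> x + \<alpha> * r) / \<alpha> < - b / \<alpha>" using \<alpha> by (intro divide_strict_right_mono) auto
      moreover have "- (a \<bullet> x + \<alpha> * r) / \<alpha> = - (a \<bullet> x) / \<alpha> - r" using \<alpha> by (simp add: field_simps)
      ultimately have "- (a \<bullet> x) / \<alpha> - r < - b / \<alpha>" by simp
      then show ?thesis using real by simp
    qed (use np in auto)
  qed
  then have "conjugate f (- (1 / \<alpha>) *\<^sub>R a) \<noteq> \<infinity>" by (metis PInfty_neq_ereal(1) ereal_infty_less_eq(1))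
  then show ?thesis by blast
qed

lemma conj_proper:
  fixes f :: "'a::euclidean_space \<Rightarrow> ereal"
  assumes "proper_fun f" "closed_fun f" "convex_fun f"
  shows "proper_fun (conjugate f)"
  using conj_not_minf[OF assms(1)] conj_finite_point[OF assms] unfolding proper_fun_def by blast

lemma alg:
  fixes t \<gamma> a1 a2 b2 D g F0 F1 F2 :: real
  assumes t: "0 < t" "t < 1" and g: "\<gamma> > 0"
    and h1: "F1 \<le> F0 + (1 - t) * \<gamma> * g + \<gamma> / 2 * (1 - t)\<^sup>2 * D"
    and h2: "F2 \<le> F0 - t * \<gamma> * g + \<gamma> / 2 * t\<^sup>2 * D"
  shows "t * a1 + (1 - t) * a2 - F0 \<le> t * (a1 + (1 - t) * \<gamma> * (b2 + D) - F1) + (1 - t) * (a2 - t * \<gamma> * b2 - F2) - \<gamma> / 2 * t * (1 - t) * D"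
proof -
  have h1': "t * F1 \<le> t * (F0 + (1 - t) * \<gamma> * g + \<gamma> / 2 * (1 - t)\<^sup>2 * D)" using h1 t by (intro mult_left_mono) auto
  have h2': "(1 - t) * F2 \<le> (1 - t) * (F0 - t * \<gamma> * g + \<gamma> / 2 * t\<^sup>2 * D)" using h2 t by (intro mult_left_mono) auto
  have e: "t * (a1 + (1 - t) * \<gamma> * (b2 + D) - F1) + (1 - t) * (a2 - t * \<gamma> * b2 - F2) - \<gamma> / 2 * t * (1 - t) * D
     - (t * a1 + (1 - t) * a2 - F0)
     = (t * (F0 + (1 - t) * \<gamma> * g + \<gamma> / 2 * (1 - t)\<^sup>2 * D) - t * F1) + ((1 - t) * (F0 - t * \<gamma> * g + \<gamma> / 2 * t\<^sup>2 * D) - (1 - t) * F2)"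
    by (simp add: field_simps power2_eq_square)
  show ?thesis using h1' h2' e by linarith
qed

lemma descent:
  fixes fr :: "'a::real_inner \<Rightarrow> real"
  assumes D: "\<And>x. (fr has_derivative (\<lambda>h. G x \<bullet> h)) (at x)"
    and L: "\<And>x y. norm (G x - G y) \<le> L * norm (x - y)"
  shows "fr (x + e) \<le> fr x + G x \<bullet> e + L / 2 * (norm e)\<^sup>2"
proof -
  define \<phi> where "\<phi> s = fr (x + s *\<^sub>R e) - s * (G x \<bullet> e) - L / 2 * s\<^sup>2 * (norm e)\<^sup>2" for s
  have d1: "((\<lambda>s. fr (x + s *\<^sub>R e)) has_real_derivative (G (x + s *\<^sub>R e) \<bullet> e)) (at s)" for s
  proof -
    have l: "((\<lambda>s. x + s *\<^sub>R e) has_derivative (\<lambda>h. h *\<^sub>R e)) (at s)"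
      by (auto intro!: derivative_eq_intros)
    have "((\<lambda>s. fr (x + s *\<^sub>R e)) has_derivative (\<lambda>h. G (x + s *\<^sub>R e) \<bullet> (h *\<^sub>R e))) (at s)"
      using has_derivative_compose[OF l D] by simp
    moreover have "(\<lambda>h. G (x + s *\<^sub>R e) \<bullet> (h *\<^sub>R e)) = (*) (G (x + s *\<^sub>R e) \<bullet> e)"
      by (auto simp: fun_eq_iff)
    ultimately show ?thesis unfolding has_field_derivative_def by simp
  qed
  have d: "(\<phi> has_real_derivative (G (x + s *\<^sub>R e) \<bullet> e - G x \<bullet> e - L * s * (norm e)\<^sup>2)) (at s)" for s
    unfolding \<phi>_def
    by (rule derivative_eq_intros d1 | simp)+
  have nonpos: "G (x + s *\<^sub>R e) \<bullet> e - G x \<bullet> e - L * s * (norm e)\<^sup>2 \<le> 0" if "0 \<le> s" for s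
  proof -
    have "G (x + s *\<^sub>R e) \<bullet> e - G x \<bullet> e = (G (x + s *\<^sub>R e) - G x) \<bullet> e" by (simp add: inner_diff_left)
    also have "\<dots> \<le> norm (G (x + s *\<^sub>R e) - G x) * norm e" by (rule norm_cauchy_schwarz)
    also have "\<dots> \<le> (L * norm (s *\<^sub>R e)) * norm e" using L[of "x + s *\<^sub>R e" x] by (intro mult_right_mono) auto
    also have "\<dots> = L * s * (norm e)\<^sup>2" using that by (simp add: power2_eq_square)
    finally show ?thesis by simp
  qed
  have "\<phi> 1 \<le> \<phi> 0"
  proof (rule DERIV_nonpos_imp_nonincreasing[of 0 1])
    fix s :: real assume "0 \<le> s" "s \<le> 1"
    then show "\<exists>y. (\<phi> has_real_derivative y) (at s) \<and> y \<le> 0"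
      using d[of s] nonpos[of s] by blast
  qed simp
  then show ?thesis unfolding \<phi>_def by simp
qed

lemma conj_key:
  fixes f :: "'a::euclidean_space \<Rightarrow> ereal"
  assumes g0: "\<gamma> \<ge> 0" and sm: "smooth_fun \<gamma> f" and fx: "f x = ereal F0" and t: "0 < t" "t < 1"
  shows "\<exists>x1 x2 F1 F2. f x1 = ereal F1 \<and> f x2 = ereal F2 \<and>
     (t *\<^sub>R y1 + (1 - t) *\<^sub>R y2) \<bullet> x - F0 \<le> t * (y1 \<bullet> x1 - F1) + (1 - t) * (y2 \<bullet> x2 - F2)
        - \<gamma> / 2 * t * (1 - t) * (norm (y1 - y2))\<^sup>2"
proof (cases "\<gamma> = 0")
  case True
  then show ?thesis using fx by (intro exI[of _ x] exI[of _ F0]) (auto simp: algebra_simps inner_add_left)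
next
  case False
  then have gp: "\<gamma> > 0" using g0 by simp
  then have fin: "\<And>x. \<bar>f x\<bar> \<noteq> \<infinity>" using sm unfolding smooth_fun_def by metis
  obtain G where G: "\<And>x. ((\<lambda>z. real_of_ereal (f z)) has_derivative (\<lambda>h. G x \<bullet> h)) (at x)"
    "\<And>x y. norm (G x - G y) \<le> (1 / \<gamma>) * norm (x - y)"
    using sm gp unfolding smooth_fun_def by blast
  define fr where "fr z = real_of_ereal (f z)" for z
  have ffr: "f z = ereal (fr z)" for z using fin[of z] unfolding fr_def by (cases "f z") auto
  have F0: "F0 = fr x" using fx ffr[of x] by simp
  define d where "d = y1 - y2"
  define x1 where "x1 = x + ((1 - t) * \<gamma>) *\<^sub>R d"
  define x2 where "x2 = x + (- (t * \<gamma>)) *\<^sub>R d"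
  have desc: "fr (x + e) \<le> fr x + G x \<bullet> e + (1 / \<gamma>) / 2 * (norm e)\<^sup>2" for e
    using descent[of fr G "1 / \<gamma>" x e] G unfolding fr_def by blast
  have h1: "fr x1 \<le> fr x + (1 - t) * \<gamma> * (G x \<bullet> d) + \<gamma> / 2 * (1 - t)\<^sup>2 * (norm d)\<^sup>2"
  proof -
    have n: "norm (((1 - t) * \<gamma>) *\<^sub>R d) = (1 - t) * \<gamma> * norm d" using gp t by simp
    have "(1 / \<gamma>) / 2 * (norm (((1 - t) * \<gamma>) *\<^sub>R d))\<^sup>2 = \<gamma> / 2 * (1 - t)\<^sup>2 * (norm d)\<^sup>2"
      unfolding n using gp t by (simp add: power2_eq_square field_simps)
    then show ?thesis using desc[of "((1 - t) * \<gamma>) *\<^sub>R d"] unfolding x1_def by simp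
  qed
  have h2: "fr x2 \<le> fr x - t * \<gamma> * (G x \<bullet> d) + \<gamma> / 2 * t\<^sup>2 * (norm d)\<^sup>2"
  proof -
    have n: "norm ((- (t * \<gamma>)) *\<^sub>R d) = t * \<gamma> * norm d" using gp t by simp
    have "(1 / \<gamma>) / 2 * (norm ((- (t * \<gamma>)) *\<^sub>R d))\<^sup>2 = \<gamma> / 2 * t\<^sup>2 * (norm d)\<^sup>2"
      unfolding n using gp t by (simp add: power2_eq_square field_simps)
    then show ?thesis using desc[of "(- (t * \<gamma>)) *\<^sub>R d"] unfolding x2_def by simp
  qed
  have e1: "y1 \<bullet> x1 = y1 \<bullet> x + (1 - t) * \<gamma> * (y2 \<bullet> d + (norm d)\<^sup>2)"
  proof -
    have "y1 = y2 + d" unfolding d_def by simp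
    then have "y1 \<bullet> d = y2 \<bullet> d + (norm d)\<^sup>2" by (simp add: inner_add_left power2_norm_eq_inner)
    then show ?thesis unfolding x1_def by (simp add: inner_add_right)
  qed
  have e2: "y2 \<bullet> x2 = y2 \<bullet> x - t * \<gamma> * (y2 \<bullet> d)" unfolding x2_def by (simp add: inner_add_right inner_diff_right)
  have e3: "(t *\<^sub>R y1 + (1 - t) *\<^sub>R y2) \<bullet> x = t * (y1 \<bullet> x) + (1 - t) * (y2 \<bullet> x)" by (simp add: inner_add_left)
  have "(t *\<^sub>R y1 + (1 - t) *\<^sub>R y2) \<bullet> x - F0 \<le> t * (y1 \<bullet> x1 - fr x1) + (1 - t) * (y2 \<bullet> x2 - fr x2)
        - \<gamma> / 2 * t * (1 - t) * (norm (y1 - y2))\<^sup>2"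
    unfolding e1 e2 e3 F0 d_def[symmetric] by (rule alg[OF t gp h1 h2])
  then show ?thesis using ffr by blast
qed

lemma conj_sc:
  fixes f :: "'a::euclidean_space \<Rightarrow> ereal"
  assumes pr: "proper_fun f" and g0: "\<gamma> \<ge> 0" and sm: "smooth_fun \<gamma> f"
  shows "strongly_convex_fun \<gamma> (conjugate f)"
  unfolding strongly_convex_fun_def
proof (intro allI impI)
  fix y1 y2 :: 'a and t :: real assume t: "0 < t \<and> t < 1"
  show "conjugate f (t *\<^sub>R y1 + (1 - t) *\<^sub>R y2) \<le> ereal t * conjugate f y1 + ereal (1 - t) * conjugate f y2
        - ereal (\<gamma> / 2 * t * (1 - t) * (norm (y1 - y2))\<^sup>2)"
    unfolding conjugate_def[of f "t *\<^sub>R y1 + (1 - t) *\<^sub>R y2"]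
  proof (rule SUP_least)
    fix x assume "x \<in> (UNIV :: 'a set)"
    show "ereal ((t *\<^sub>R y1 + (1 - t) *\<^sub>R y2) \<bullet> x) - f x \<le> ereal t * conjugate f y1 + ereal (1 - t) * conjugate f y2
        - ereal (\<gamma> / 2 * t * (1 - t) * (norm (y1 - y2))\<^sup>2)"
    proof (cases "f x")
      case (real F0)
      obtain x1 x2 F1 F2 where k: "f x1 = ereal F1" "f x2 = ereal F2"
        "(t *\<^sub>R y1 + (1 - t) *\<^sub>R y2) \<bullet> x - F0 \<le> t * (y1 \<bullet> x1 - F1) + (1 - t) * (y2 \<bullet> x2 - F2)
        - \<gamma> / 2 * t * (1 - t) * (norm (y1 - y2))\<^sup>2"
        using conj_key[OF g0 sm real, of t y1 y2] t by blast
      have "ereal ((t *\<^sub>R y1 + (1 - t) *\<^sub>R y2) \<bullet> x) - f x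
         \<le> ereal t * ereal (y1 \<bullet> x1 - F1) + ereal (1 - t) * ereal (y2 \<bullet> x2 - F2)
            - ereal (\<gamma> / 2 * t * (1 - t) * (norm (y1 - y2))\<^sup>2)"
        using k(3) real by simp
      also have "\<dots> \<le> ereal t * conjugate f y1 + ereal (1 - t) * conjugate f y2
            - ereal (\<gamma> / 2 * t * (1 - t) * (norm (y1 - y2))\<^sup>2)"
        using conj_upper[of y1 x1 f] conj_upper[of y2 x2 f] k(1,2) t by (intro comb_mono) auto
      finally show ?thesis .
    qed (use pr in \<open>auto simp: proper_fun_def\<close>)
  qed
qed

lemma norm_expand:
  fixes a q :: "'a::real_inner"
  shows "(norm (a + c *\<^sub>R q))\<^sup>2 = (norm a)\<^sup>2 + 2 * c * (q \<bullet> a) + c\<^sup>2 * (norm q)\<^sup>2"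
  unfolding power2_norm_eq_inner
  by (simp add: inner_add_left inner_add_right inner_commute algebra_simps power2_eq_square)

lemma transpose_inner:
  fixes A :: "real^'d^'n"
  shows "(transpose A *v y) \<bullet> w = y \<bullet> (A *v w)"
  by (metis dot_lmul_matrix vector_transpose_matrix transpose_transpose)

lemma cross_bound:
  fixes a e R \<eta> \<tau> :: real
  assumes "\<eta> > 0" "\<tau> > 0" "\<eta> * \<tau> * R\<^sup>2 \<le> 1" "a \<ge> 0" "e \<ge> 0"
  shows "R * a * e \<le> a\<^sup>2 / (2 * \<tau>) + e\<^sup>2 / (2 * \<eta>)"
proof -
  have h1: "0 \<le> \<eta> * (a - \<tau> * R * e)\<^sup>2" using assms by simp
  have h2: "0 \<le> \<tau> * e\<^sup>2 * (1 - \<eta> * \<tau> * R\<^sup>2)" using assms by simp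
  have id: "\<eta> * a\<^sup>2 + \<tau> * e\<^sup>2 - 2 * \<tau> * \<eta> * R * a * e = \<eta> * (a - \<tau> * R * e)\<^sup>2 + \<tau> * e\<^sup>2 * (1 - \<eta> * \<tau> * R\<^sup>2)"
    by (simp add: algebra_simps power2_eq_square)
  have "2 * \<tau> * \<eta> * (R * a * e) \<le> \<eta> * a\<^sup>2 + \<tau> * e\<^sup>2" using h1 h2 id by linarith
  moreover have "\<eta> * a\<^sup>2 + \<tau> * e\<^sup>2 = 2 * \<tau> * \<eta> * (a\<^sup>2 / (2 * \<tau>) + e\<^sup>2 / (2 * \<eta>))"
    using assms by (simp add: field_simps)
  ultimately have "2 * \<tau> * \<eta> * (R * a * e) \<le> 2 * \<tau> * \<eta> * (a\<^sup>2 / (2 * \<tau>) + e\<^sup>2 / (2 * \<eta>))" by simp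
  then show ?thesis using assms by (simp add: mult_le_cancel_left_pos)
qed

lemma step_ineq:
  fixes A :: "real^'d^'n" and xt w xb :: "real^'d" and yt y1 v :: "real^'n"
  assumes i: "\<eta> * Gxb + (norm (xb - (xt - \<eta> *\<^sub>R (transpose A *v yt))))\<^sup>2 / 2 + (1 + \<eta> * \<mu>) / 2 * (norm (w - xb))\<^sup>2
              \<le> \<eta> * Gw + (norm (w - (xt - \<eta> *\<^sub>R (transpose A *v yt))))\<^sup>2 / 2"
    and ii: "\<tau> * Hy1 + (norm (y1 - (yt + \<tau> *\<^sub>R (A *v xb))))\<^sup>2 / 2 + (1 + \<tau> * \<gamma>) / 2 * (norm (v - y1))\<^sup>2
              \<le> \<tau> * Hv + (norm (v - (yt + \<tau> *\<^sub>R (A *v xb))))\<^sup>2 / 2"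
    and pos: "\<eta> > 0" "\<tau> > 0" "\<beta> > 0" "\<tau>' > 0" "\<mu> \<ge> 0" "\<gamma> \<ge> 0"
    and s1: "\<beta> \<le> \<eta> * (1 + B * \<mu>)" and s2: "\<eta> * \<tau> * (onorm (\<lambda>z. A *v z))\<^sup>2 \<le> 1"
    and s3: "\<beta>' / \<tau>' \<le> \<beta> / \<tau> * (1 + \<gamma> * \<tau>)"
  shows "\<beta> * ((Gxb + y1 \<bullet> (A *v xb)) - (Gw + y1 \<bullet> (A *v w))) - (1 + B * \<mu>) / 2 * (norm (w - xt))\<^sup>2
          + \<beta> * (Hy1 - Hv - (y1 - v) \<bullet> (A *v xb))
         \<le> \<beta> / (2 * \<tau>) * (norm (v - yt))\<^sup>2 - \<beta>' / (2 * \<tau>') * (norm (v - y1))\<^sup>2"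
proof -
  define q where "q = transpose A *v yt"
  define p where "p = A *v xb"
  define R where "R = onorm (\<lambda>z. A *v z)"
  define N1 where "N1 = (norm (w - xt))\<^sup>2"
  define N2 where "N2 = (norm (xb - xt))\<^sup>2"
  define N3 where "N3 = (norm (w - xb))\<^sup>2"
  define N4 where "N4 = (norm (y1 - yt))\<^sup>2"
  define N5 where "N5 = (norm (v - y1))\<^sup>2"
  define N6 where "N6 = (norm (v - yt))\<^sup>2"
  have N0: "N1 \<ge> 0" "N2 \<ge> 0" "N3 \<ge> 0" "N4 \<ge> 0" "N5 \<ge> 0" "N6 \<ge> 0"
    unfolding N1_def N2_def N3_def N4_def N5_def N6_def by simp_all
  have e1: "xb - (xt - \<eta> *\<^sub>R q) = (xb - xt) + \<eta> *\<^sub>R q" by (simp add: algebra_simps)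
  have e2: "w - (xt - \<eta> *\<^sub>R q) = (w - xt) + \<eta> *\<^sub>R q" by (simp add: algebra_simps)
  have i': "\<eta> * Gxb + (N2 + 2 * \<eta> * (q \<bullet> (xb - xt)) + \<eta>\<^sup>2 * (norm q)\<^sup>2) / 2 + (1 + \<eta> * \<mu>) / 2 * N3
      \<le> \<eta> * Gw + (N1 + 2 * \<eta> * (q \<bullet> (w - xt)) + \<eta>\<^sup>2 * (norm q)\<^sup>2) / 2"
    using i unfolding q_def[symmetric] e1 e2 norm_expand N1_def N2_def N3_def .
  have qd: "q \<bullet> (xb - xt) - q \<bullet> (w - xt) = yt \<bullet> (A *v xb) - yt \<bullet> (A *v w)"
    unfolding q_def by (simp add: inner_diff_right transpose_inner dot_lmul_matrix)
  have "\<eta> * (Gxb - Gw + (q \<bullet> (xb - xt) - q \<bullet> (w - xt))) \<le> (N1 - N2 - (1 + \<eta> * \<mu>) * N3) / 2"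
    using i' by (simp add: field_simps)
  then have A1: "Gxb - Gw + (yt \<bullet> (A *v xb) - yt \<bullet> (A *v w)) \<le> (N1 - N2 - (1 + \<eta> * \<mu>) * N3) / 2 / \<eta>"
    unfolding qd using pos(1) by (simp add: pos_le_divide_eq mult.commute)
  have e3: "y1 - (yt + \<tau> *\<^sub>R p) = (y1 - yt) + (- \<tau>) *\<^sub>R p" by (simp add: algebra_simps)
  have e4: "v - (yt + \<tau> *\<^sub>R p) = (v - yt) + (- \<tau>) *\<^sub>R p" by (simp add: algebra_simps)
  have ii': "\<tau> * Hy1 + (N4 + 2 * (- \<tau>) * (p \<bullet> (y1 - yt)) + (- \<tau>)\<^sup>2 * (norm p)\<^sup>2) / 2 + (1 + \<tau> * \<gamma>) / 2 * N5
      \<le> \<tau> * Hv + (N6 + 2 * (- \<tau>) * (p \<bullet> (v - yt)) + (- \<tau>)\<^sup>2 * (norm p)\<^sup>2) / 2"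
    using ii unfolding p_def[symmetric] e3 e4 norm_expand N4_def N5_def N6_def .
  have pd: "p \<bullet> (y1 - yt) - p \<bullet> (v - yt) = (y1 - v) \<bullet> p"
    by (simp add: inner_diff_right inner_diff_left inner_commute)
  have "\<tau> * (Hy1 - Hv - (p \<bullet> (y1 - yt) - p \<bullet> (v - yt))) \<le> (N6 - N4 - (1 + \<tau> * \<gamma>) * N5) / 2"
    using ii' by (simp add: field_simps)
  then have A2: "Hy1 - Hv - (y1 - v) \<bullet> p \<le> (N6 - N4 - (1 + \<tau> * \<gamma>) * N5) / 2 / \<tau>"
    unfolding pd using pos(2) by (simp add: pos_le_divide_eq mult.commute)
  have cdef: "(y1 - yt) \<bullet> (A *v xb - A *v w) = y1 \<bullet> (A *v xb) - y1 \<bullet> (A *v w) - (yt \<bullet> (A *v xb) - yt \<bullet> (A *v w))"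
    by (simp add: inner_diff_left inner_diff_right)
  have "(y1 - yt) \<bullet> (A *v xb - A *v w) \<le> norm (y1 - yt) * norm (A *v xb - A *v w)"
    by (rule norm_cauchy_schwarz)
  also have "norm (A *v xb - A *v w) = norm (A *v (xb - w))" by (simp add: matrix_vector_mult_diff_distrib)
  also have "norm (A *v (xb - w)) \<le> R * norm (xb - w)" unfolding R_def
    by (rule onorm) simp
  finally have "(y1 - yt) \<bullet> (A *v xb - A *v w) \<le> norm (y1 - yt) * (R * norm (xb - w))"
    by (meson mult_left_mono norm_ge_zero order.trans)
  also have "\<dots> = R * norm (y1 - yt) * norm (w - xb)" by (simp add: norm_minus_commute)
  also have "\<dots> \<le> (norm (y1 - yt))\<^sup>2 / (2 * \<tau>) + (norm (w - xb))\<^sup>2 / (2 * \<eta>)"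
    using s2 pos by (intro cross_bound) (auto simp: R_def)
  finally have A3: "y1 \<bullet> (A *v xb) - y1 \<bullet> (A *v w) - (yt \<bullet> (A *v xb) - yt \<bullet> (A *v w)) \<le> N4 / (2 * \<tau>) + N3 / (2 * \<eta>)"
    unfolding cdef N4_def N3_def .
  have f1: "(N1 - N2 - (1 + \<eta> * \<mu>) * N3) / 2 / \<eta> = N1 / (2 * \<eta>) - N2 / (2 * \<eta>) - N3 / (2 * \<eta>) - \<mu> * N3 / 2"
    using pos by (simp add: field_simps)
  have f2: "(N6 - N4 - (1 + \<tau> * \<gamma>) * N5) / 2 / \<tau> = N6 / (2 * \<tau>) - N4 / (2 * \<tau>) - (1 + \<tau> * \<gamma>) * N5 / (2 * \<tau>)"
    using pos by (simp add: field_simps)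
  have n2: "N2 / (2 * \<eta>) \<ge> 0" "\<mu> * N3 / 2 \<ge> 0" using N0 pos by simp_all
  define S where "S = ((Gxb + y1 \<bullet> (A *v xb)) - (Gw + y1 \<bullet> (A *v w))) + (Hy1 - Hv - (y1 - v) \<bullet> (A *v xb))"
  have S: "S \<le> N1 / (2 * \<eta>) + N6 / (2 * \<tau>) - (1 + \<tau> * \<gamma>) * N5 / (2 * \<tau>)"
    using A1 A2 A3 f1 f2 n2 unfolding S_def p_def by linarith
  have "\<beta> * S \<le> \<beta> * (N1 / (2 * \<eta>) + N6 / (2 * \<tau>) - (1 + \<tau> * \<gamma>) * N5 / (2 * \<tau>))"
    using S pos by (intro mult_left_mono) auto
  also have "\<dots> = (\<beta> / \<eta>) * N1 / 2 + \<beta> / (2 * \<tau>) * N6 - (\<beta> / \<tau> * (1 + \<gamma> * \<tau>)) * N5 / 2"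
    using pos by (simp add: field_simps)
  also have "\<dots> \<le> (1 + B * \<mu>) * N1 / 2 + \<beta> / (2 * \<tau>) * N6 - (\<beta>' / \<tau>') * N5 / 2"
  proof -
    have "\<beta> / \<eta> \<le> 1 + B * \<mu>" using s1 pos by (simp add: divide_le_eq mult.commute)
    then have a: "(\<beta> / \<eta>) * N1 \<le> (1 + B * \<mu>) * N1" using N0 by (intro mult_right_mono) auto
    have b: "(\<beta>' / \<tau>') * N5 \<le> (\<beta> / \<tau> * (1 + \<gamma> * \<tau>)) * N5" using s3 N0 by (intro mult_right_mono) auto
    have c1: "(\<beta> / \<eta>) * N1 / 2 \<le> (1 + B * \<mu>) * N1 / 2" using a by (rule divide_right_mono) simp
    have c2: "(\<beta>' / \<tau>') * N5 / 2 \<le> (\<beta> / \<tau> * (1 + \<gamma> * \<tau>)) * N5 / 2" using b by (rule divide_right_mono) simp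
    show ?thesis by (intro diff_mono add_mono c1 c2 order_refl)
  qed
  finally have "\<beta> * S \<le> (1 + B * \<mu>) * N1 / 2 + \<beta> / (2 * \<tau>) * N6 - (\<beta>' / \<tau>') * N5 / 2" .
  moreover have "\<beta> * S = \<beta> * ((Gxb + y1 \<bullet> (A *v xb)) - (Gw + y1 \<bullet> (A *v w))) + \<beta> * (Hy1 - Hv - (y1 - v) \<bullet> (A *v xb))"
    unfolding S_def by (simp add: algebra_simps)
  moreover have "(\<beta>' / \<tau>') * N5 / 2 = \<beta>' / (2 * \<tau>') * N5" by simp
  ultimately show ?thesis unfolding N1_def N5_def N6_def by (simp add: algebra_simps)
qed

lemma main_real:
  fixes A :: "real^'d^'n" and G :: "real^'d \<Rightarrow> real" and H :: "real^'n \<Rightarrow> real" and D :: "real^'d \<Rightarrow> bool"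
    and \<beta> \<eta> \<tau> :: "nat \<Rightarrow> real" and x xbar :: "nat \<Rightarrow> real^'d" and y :: "nat \<Rightarrow> real^'n"
    and u :: "real^'d" and v :: "real^'n" and \<mu> \<gamma> :: real and T :: nat
  assumes \<beta>_pos: "\<And>t. \<beta> t > 0" and \<eta>_pos: "\<And>t. \<eta> t > 0" and \<tau>_pos: "\<And>t. \<tau> t > 0"
    and \<mu>0: "\<mu> \<ge> 0" and \<gamma>0: "\<gamma> \<ge> 0"
    and step1: "\<And>t. t < T \<Longrightarrow> \<eta> t * (1 + (\<Sum>k<t. \<beta> k) * \<mu>) \<ge> \<beta> t"
    and step2: "\<And>t. t < T \<Longrightarrow> \<eta> t * \<tau> t * (onorm (\<lambda>z. A *v z))\<^sup>2 \<le> 1"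
    and step3: "\<And>t. t < T \<Longrightarrow> \<beta> (Suc t) / \<tau> (Suc t) \<le> \<beta> t / \<tau> t * (1 + \<gamma> * \<tau> t)"
    and Du: "D u" and Dx: "\<And>t. D (x (Suc t))"
    and PX: "\<And>t w. D w \<Longrightarrow> (\<Sum>k\<le>t. \<beta> k) * G (x (Suc t))
        + (norm (x (Suc t) - (x 0 - (\<Sum>k\<le>t. \<beta> k *\<^sub>R (transpose A *v y (Suc k))))))\<^sup>2 / 2
        + (1 + (\<Sum>k\<le>t. \<beta> k) * \<mu>) / 2 * (norm (w - x (Suc t)))\<^sup>2
        \<le> (\<Sum>k\<le>t. \<beta> k) * G w + (norm (w - (x 0 - (\<Sum>k\<le>t. \<beta> k *\<^sub>R (transpose A *v y (Suc k))))))\<^sup>2 / 2"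
    and PXB: "\<And>t. \<eta> t * G (xbar (Suc t)) + (norm (xbar (Suc t) - (x t - \<eta> t *\<^sub>R (transpose A *v y t))))\<^sup>2 / 2
        + (1 + \<eta> t * \<mu>) / 2 * (norm (x (Suc t) - xbar (Suc t)))\<^sup>2
        \<le> \<eta> t * G (x (Suc t)) + (norm (x (Suc t) - (x t - \<eta> t *\<^sub>R (transpose A *v y t))))\<^sup>2 / 2"
    and PY: "\<And>t. \<tau> t * H (y (Suc t)) + (norm (y (Suc t) - (y t + \<tau> t *\<^sub>R (A *v xbar (Suc t)))))\<^sup>2 / 2
        + (1 + \<tau> t * \<gamma>) / 2 * (norm (v - y (Suc t)))\<^sup>2
        \<le> \<tau> t * H v + (norm (v - (y t + \<tau> t *\<^sub>R (A *v xbar (Suc t)))))\<^sup>2 / 2"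
  shows "(\<Sum>t<T. \<beta> t * ((G (xbar (Suc t)) + v \<bullet> (A *v xbar (Suc t)) - H v)
            - (G u + y (Suc t) \<bullet> (A *v u) - H (y (Suc t)))))
         \<le> \<beta> 0 / (2 * \<tau> 0) * (norm (y 0 - v))\<^sup>2 + 1 / 2 * (norm (x 0 - u))\<^sup>2"
proof -
  define B where "B t = (\<Sum>k<t. \<beta> k)" for t
  define ell where "ell t w = G w + y (Suc t) \<bullet> (A *v w)" for t w
  define P where "P t w = (\<Sum>k<t. \<beta> k * ell k w) + (norm (w - x 0))\<^sup>2 / 2" for t w
  have C1: "P t (x t) + (1 + B t * \<mu>) / 2 * (norm (w - x t))\<^sup>2 \<le> P t w" if Dw: "t = 0 \<or> D w" for t w
  proof (cases t)
    case 0
    then show ?thesis unfolding P_def B_def by simp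
  next
    case (Suc s)
    then have Dw': "D w" using Dw by simp
    define S where "S = (\<Sum>k\<le>s. \<beta> k *\<^sub>R (transpose A *v y (Suc k)))"
    define c where "c = (\<Sum>k\<le>s. \<beta> k)"
    have Bc: "B (Suc s) = c" unfolding B_def c_def by (simp add: lessThan_Suc_atMost)
    have Pform: "P (Suc s) z = c * G z + S \<bullet> z + (norm (z - x 0))\<^sup>2 / 2" for z
    proof -
      have "(\<Sum>k<Suc s. \<beta> k * ell k z) = (\<Sum>k\<le>s. \<beta> k * G z) + (\<Sum>k\<le>s. \<beta> k * (y (Suc k) \<bullet> (A *v z)))"
        unfolding ell_def lessThan_Suc_atMost by (simp add: distrib_left sum.distrib)
      moreover have "(\<Sum>k\<le>s. \<beta> k * G z) = c * G z" unfolding c_def by (simp add: sum_distrib_right)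
      moreover have "S \<bullet> z = (\<Sum>k\<le>s. \<beta> k * (y (Suc k) \<bullet> (A *v z)))"
        unfolding S_def by (simp add: inner_sum_left transpose_inner dot_lmul_matrix)
      ultimately show ?thesis unfolding P_def by simp
    qed
    have nrm: "(norm (z - (x 0 - S)))\<^sup>2 = (norm (z - x 0))\<^sup>2 + 2 * (S \<bullet> z) - 2 * (S \<bullet> x 0) + (norm S)\<^sup>2" for z
    proof -
      have e: "z - (x 0 - S) = (z - x 0) + 1 *\<^sub>R S" by simp
      show ?thesis unfolding e norm_expand by (simp add: inner_diff_right)
    qed
    have "c * G (x (Suc s)) + (norm (x (Suc s) - (x 0 - S)))\<^sup>2 / 2 + (1 + c * \<mu>) / 2 * (norm (w - x (Suc s)))\<^sup>2
        \<le> c * G w + (norm (w - (x 0 - S)))\<^sup>2 / 2"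
      using PX[OF Dw', of s] unfolding S_def c_def .
    then show ?thesis unfolding Suc Bc Pform nrm by (simp add: field_simps)
  qed
  have C2: "(\<Sum>t<T'. \<beta> t * ell t (x (Suc t)) + (1 + B t * \<mu>) / 2 * (norm (x (Suc t) - x t))\<^sup>2) \<le> P T' (x T')" for T'
  proof (induction T')
    case 0
    then show ?case unfolding P_def by simp
  next
    case (Suc t)
    have "P (Suc t) (x (Suc t)) = P t (x (Suc t)) + \<beta> t * ell t (x (Suc t))" unfolding P_def by simp
    moreover have "P t (x t) + (1 + B t * \<mu>) / 2 * (norm (x (Suc t) - x t))\<^sup>2 \<le> P t (x (Suc t))"
      using C1 Dx by blast
    ultimately show ?case using Suc.IH by simp
  qed
  have C3: "P T (x T) \<le> P T u"
  proof -
    have "P T (x T) + (1 + B T * \<mu>) / 2 * (norm (u - x T))\<^sup>2 \<le> P T u" using C1 Du by blast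
    moreover have "B T \<ge> 0" unfolding B_def using \<beta>_pos by (simp add: sum_nonneg less_imp_le)
    then have "(1 + B T * \<mu>) / 2 * (norm (u - x T))\<^sup>2 \<ge> 0" using \<mu>0 by simp
    ultimately show ?thesis by linarith
  qed
  define Z where "Z t = \<beta> t * (ell t (xbar (Suc t)) - ell t (x (Suc t))) - (1 + B t * \<mu>) / 2 * (norm (x (Suc t) - x t))\<^sup>2
      + \<beta> t * (H (y (Suc t)) - H v - (y (Suc t) - v) \<bullet> (A *v xbar (Suc t)))" for t
  have C4: "Z t \<le> \<beta> t / (2 * \<tau> t) * (norm (v - y t))\<^sup>2 - \<beta> (Suc t) / (2 * \<tau> (Suc t)) * (norm (v - y (Suc t)))\<^sup>2"
    if "t < T" for t
    unfolding Z_def ell_def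
    by (rule step_ineq[OF PXB PY \<eta>_pos \<tau>_pos \<beta>_pos \<tau>_pos \<mu>0 \<gamma>0 _ step2[OF that] step3[OF that]])
       (use step1[OF that] in \<open>simp add: B_def mult.commute\<close>)
  have C5: "T' \<le> T \<Longrightarrow> (\<Sum>t<T'. Z t) \<le> \<beta> 0 / (2 * \<tau> 0) * (norm (v - y 0))\<^sup>2 - \<beta> T' / (2 * \<tau> T') * (norm (v - y T'))\<^sup>2" for T'
  proof (induction T')
    case 0
    then show ?case by simp
  next
    case (Suc t)
    then have "t < T" by simp
    then show ?case using Suc.IH C4[of t] Suc.prems by simp
  qed
  define W where "W t = \<beta> t * ell t (x (Suc t)) + (1 + B t * \<mu>) / 2 * (norm (x (Suc t) - x t))\<^sup>2" for t
  have pw: "\<beta> t * ((G (xbar (Suc t)) + v \<bullet> (A *v xbar (Suc t)) - H v) - (G u + y (Suc t) \<bullet> (A *v u) - H (y (Suc t))))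
      = Z t + W t - \<beta> t * ell t u" for t
    unfolding Z_def W_def ell_def by (simp add: algebra_simps inner_diff_left)
  have "(\<Sum>t<T. \<beta> t * ((G (xbar (Suc t)) + v \<bullet> (A *v xbar (Suc t)) - H v) - (G u + y (Suc t) \<bullet> (A *v u) - H (y (Suc t)))))
      = (\<Sum>t<T. Z t) + (\<Sum>t<T. W t) - (\<Sum>t<T. \<beta> t * ell t u)"
    unfolding pw by (simp add: sum.distrib sum_subtractf)
  also have "(\<Sum>t<T. \<beta> t * ell t u) = P T u - (norm (u - x 0))\<^sup>2 / 2" unfolding P_def by simp
  also have "(\<Sum>t<T. W t) \<le> P T (x T)" unfolding W_def by (rule C2)
  also have "(\<Sum>t<T. Z t) \<le> \<beta> 0 / (2 * \<tau> 0) * (norm (v - y 0))\<^sup>2 - \<beta> T / (2 * \<tau> T) * (norm (v - y T))\<^sup>2"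
    by (rule C5) simp
  finally have "(\<Sum>t<T. \<beta> t * ((G (xbar (Suc t)) + v \<bullet> (A *v xbar (Suc t)) - H v) - (G u + y (Suc t) \<bullet> (A *v u) - H (y (Suc t)))))
     \<le> \<beta> 0 / (2 * \<tau> 0) * (norm (v - y 0))\<^sup>2 - \<beta> T / (2 * \<tau> T) * (norm (v - y T))\<^sup>2 + P T (x T) - (P T u - (norm (u - x 0))\<^sup>2 / 2)"
    by simp
  moreover have "\<beta> T / (2 * \<tau> T) * (norm (v - y T))\<^sup>2 \<ge> 0" using \<beta>_pos[of T] \<tau>_pos[of T] by simp
  ultimately show ?thesis using C3 by (simp add: norm_minus_commute)
qed

lemma prox_scaled:
  fixes h :: "'a::euclidean_space \<Rightarrow> ereal"
  assumes pr: "proper_fun h" and l: "lsc_seq h" and sc: "strongly_convex_fun \<sigma> h" and s0: "\<sigma> \<ge> 0" and c: "c > 0"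
  shows "\<exists>a. h (prox (\<lambda>w. ereal c * h w) u) = ereal a \<and>
     (\<forall>w b. h w = ereal b \<longrightarrow> c * a + (norm (prox (\<lambda>w. ereal c * h w) u - u))\<^sup>2 / 2
        + (1 + c * \<sigma>) / 2 * (norm (w - prox (\<lambda>w. ereal c * h w) u))\<^sup>2 \<le> c * b + (norm (w - u))\<^sup>2 / 2)"
proof -
  define Hc where "Hc = (\<lambda>w. ereal c * h w)"
  define p where "p = prox Hc u"
  have np: "\<And>x. h x \<noteq> -\<infinity>" using pr unfolding proper_fun_def by auto
  have prH: "proper_fun Hc" unfolding Hc_def by (rule proper_scale[OF c pr])
  have lH: "lsc_seq Hc" unfolding Hc_def by (rule lsc_scale[OF c l])
  have scH: "strongly_convex_fun (c * \<sigma>) Hc" unfolding Hc_def by (rule sc_scale[OF c sc np])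
  have npH: "\<And>x. Hc x \<noteq> -\<infinity>" using prH unfolding proper_fun_def by auto
  have cvH: "convex_fun Hc" using sc_convex[OF _ scH npH] s0 c by simp
  have minp: "\<And>w. Hc p + ereal ((norm (p - u))\<^sup>2 / 2) \<le> Hc w + ereal ((norm (w - u))\<^sup>2 / 2)"
    unfolding p_def by (rule prox_min[OF prH lH cvH])
  have "Hc p \<noteq> \<infinity>" unfolding p_def by (rule prox_finite[OF prH lH cvH])
  then have "h p \<noteq> \<infinity>" unfolding Hc_def using c by auto
  then obtain a where a: "h p = ereal a" using np[of p] by (cases "h p") auto
  have "c * a + (norm (p - u))\<^sup>2 / 2 + (1 + c * \<sigma>) / 2 * (norm (w - p))\<^sup>2 \<le> c * b + (norm (w - u))\<^sup>2 / 2"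
    if "h w = ereal b" for w b
    using prox_ineq[OF scH npH minp, of "c * a" w "c * b"] a that unfolding Hc_def by simp
  then show ?thesis using a unfolding p_def Hc_def by blast
qed

lemma jensen_ereal:
  fixes h :: "'a::real_vector \<Rightarrow> ereal" and \<beta> :: "nat \<Rightarrow> real"
  assumes cv: "convex_fun h" and np: "\<And>x. h x \<noteq> -\<infinity>" and T: "T \<ge> 1" and \<beta>: "\<And>t. \<beta> t > 0"
    and hp: "\<And>t. h (p t) = ereal (hr t)"
  shows "\<exists>z. h ((1 / (\<Sum>t<T. \<beta> t)) *\<^sub>R (\<Sum>t<T. \<beta> t *\<^sub>R p t)) = ereal z \<and>
           z \<le> (\<Sum>t<T. \<beta> t * hr t) / (\<Sum>t<T. \<beta> t)"
proof -
  define C where "C = {x. h x \<noteq> \<infinity>}"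
  define f where "f x = real_of_ereal (h x)" for x
  have fin: "x \<in> C \<Longrightarrow> h x = ereal (f x)" for x unfolding C_def f_def using np[of x] by (cases "h x") auto
  have cvC: "convex C"
  proof (rule convexI)
    fix a b :: 'a and s r :: real assume ab: "a \<in> C" "b \<in> C" and sr: "0 \<le> s" "0 \<le> r" "s + r = 1"
    show "s *\<^sub>R a + r *\<^sub>R b \<in> C"
    proof (cases "s = 0 \<or> r = 0")
      case True then show ?thesis using ab sr by auto
    next
      case False
      then have s: "0 < s" "s < 1" and r: "r = 1 - s" using sr by auto
      obtain z where "h (s *\<^sub>R a + (1 - s) *\<^sub>R b) = ereal z"
        using convex_funD_real[OF cv fin[OF ab(1)] fin[OF ab(2)] s np] by blast
      then show ?thesis unfolding C_def r by simp
    qed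
  qed
  have cvf: "convex_on C f"
  proof (rule convex_onI[OF _ cvC])
    fix s :: real and a b assume s: "0 < s" "s < 1" and ab: "a \<in> C" "b \<in> C"
    have s': "0 < 1 - s" "1 - s < 1" using s by auto
    obtain z where z: "h ((1 - s) *\<^sub>R a + (1 - (1 - s)) *\<^sub>R b) = ereal z" "z \<le> (1 - s) * f a + (1 - (1 - s)) * f b"
      using convex_funD_real[OF cv fin[OF ab(1)] fin[OF ab(2)] s' np] by blast
    then show "f ((1 - s) *\<^sub>R a + s *\<^sub>R b) \<le> (1 - s) * f a + s * f b" unfolding f_def by simp
  qed
  define W where "W = (\<Sum>t<T. \<beta> t)"
  have W: "W > 0" unfolding W_def using T \<beta> by (intro sum_pos) (auto simp: lessThan_empty_iff)
  have sum1: "(\<Sum>t<T. \<beta> t / W) = 1" using W unfolding W_def by (simp add: sum_divide_distrib[symmetric])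
  have pC: "p t \<in> C" for t using hp[of t] unfolding C_def by simp
  have ne: "{..<T} \<noteq> {}" using T by (auto simp: lessThan_empty_iff)
  have avg: "(1 / W) *\<^sub>R (\<Sum>t<T. \<beta> t *\<^sub>R p t) = (\<Sum>t<T. (\<beta> t / W) *\<^sub>R p t)"
    by (simp add: scaleR_sum_right)
  have inC: "(\<Sum>t<T. (\<beta> t / W) *\<^sub>R p t) \<in> C"
    by (rule convex_sum[OF _ cvC sum1]) (use W \<beta> pC in \<open>auto intro: less_imp_le\<close>)
  have "f (\<Sum>t<T. (\<beta> t / W) *\<^sub>R p t) \<le> (\<Sum>t<T. (\<beta> t / W) * f (p t))"
    by (rule convex_on_sum[OF _ ne cvf sum1]) (use W \<beta> pC in \<open>auto intro: less_imp_le\<close>)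
  also have "\<dots> = (\<Sum>t<T. \<beta> t * hr t) / W"
    using hp unfolding f_def by (simp add: sum_divide_distrib)
  finally have "f (\<Sum>t<T. (\<beta> t / W) *\<^sub>R p t) \<le> (\<Sum>t<T. \<beta> t * hr t) / W" .
  then show ?thesis using fin[OF inC] unfolding W_def[symmetric] avg by blast
qed

theorem theorem2p3:
  fixes A :: "real^'d^'n"
    and f :: "real^'n \<Rightarrow> ereal" and g :: "real^'d \<Rightarrow> ereal"
    and \<gamma> \<mu> :: real and T :: nat
    and \<beta> \<eta> \<tau> :: "nat \<Rightarrow> real"
    and x xbar :: "nat \<Rightarrow> real^'d" and y :: "nat \<Rightarrow> real^'n"
    and u :: "real^'d" and v :: "real^'n"
  assumes f_proper: "proper_fun f" and f_closed: "closed_fun f" and f_convex: "convex_fun f"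
    and g_proper: "proper_fun g" and g_closed: "closed_fun g" and g_convex: "convex_fun g"
    and \<gamma>_nonneg: "\<gamma> \<ge> 0" and f_smooth: "smooth_fun \<gamma> f"
    and \<mu>_nonneg: "\<mu> \<ge> 0" and g_strong: "strongly_convex_fun \<mu> g"
    and T_pos: "T \<ge> 1"
    and \<beta>_pos: "\<And>t. \<beta> t > 0" and \<eta>_pos: "\<And>t. \<eta> t > 0" and \<tau>_pos: "\<And>t. \<tau> t > 0"
    and xbar_step: "\<And>t. xbar (Suc t) =
          prox (\<lambda>w. ereal (\<eta> t) * g w) (x t - \<eta> t *\<^sub>R (transpose A *v y t))"
    and y_step: "\<And>t. y (Suc t) =
          prox (\<lambda>w. ereal (\<tau> t) * conjugate f w) (y t + \<tau> t *\<^sub>R (A *v xbar (Suc t)))"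
    and x_step: "\<And>t. x (Suc t) =
          prox (\<lambda>w. ereal (\<Sum>k\<le>t. \<beta> k) * g w)
               (x 0 - (\<Sum>k\<le>t. \<beta> k *\<^sub>R (transpose A *v y (Suc k))))"
    and step1: "\<And>t. t < T \<Longrightarrow> \<eta> t * (1 + (\<Sum>k<t. \<beta> k) * \<mu>) \<ge> \<beta> t"
    and step2: "\<And>t. t < T \<Longrightarrow> \<eta> t * \<tau> t * (onorm (\<lambda>z. A *v z))\<^sup>2 \<le> 1"
    and step3: "\<And>t. t < T \<Longrightarrow> \<beta> (Suc t) / \<tau> (Suc t) \<le> \<beta> t / \<tau> t * (1 + \<gamma> * \<tau> t)"
  shows "saddleF g f A ((1 / (\<Sum>t<T. \<beta> t)) *\<^sub>R (\<Sum>t<T. \<beta> t *\<^sub>R xbar (Suc t))) v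
       - saddleF g f A u ((1 / (\<Sum>t<T. \<beta> t)) *\<^sub>R (\<Sum>t<T. \<beta> t *\<^sub>R y (Suc t)))
     \<le> ereal ((1 / (\<Sum>t<T. \<beta> t)) *
          (\<beta> 0 / (2 * \<tau> 0) * (norm (y 0 - v))\<^sup>2 + 1 / 2 * (norm (x 0 - u))\<^sup>2))"
proof -
  have npg: "\<And>w. g w \<noteq> -\<infinity>" using g_proper unfolding proper_fun_def by auto
  have lsc_g: "lsc_seq g" by (rule closed_fun_lsc[OF g_closed])
  have prC: "proper_fun (conjugate f)" by (rule conj_proper[OF f_proper f_closed f_convex])
  have lscC: "lsc_seq (conjugate f)" by (rule conj_lsc[OF f_proper])
  have scC: "strongly_convex_fun \<gamma> (conjugate f)" by (rule conj_sc[OF f_proper \<gamma>_nonneg f_smooth])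
  have npC: "\<And>w. conjugate f w \<noteq> -\<infinity>" by (rule conj_not_minf[OF f_proper])
  have cvC: "convex_fun (conjugate f)" by (rule sc_convex[OF \<gamma>_nonneg scC npC])
  define G where "G w = real_of_ereal (g w)" for w
  define H where "H w = real_of_ereal (conjugate f w)" for w
  have Gfin: "g w = ereal (G w)" if "g w \<noteq> \<infinity>" for w
    using npg[of w] that unfolding G_def by (cases "g w") auto
  have Hfin: "conjugate f w = ereal (H w)" if "conjugate f w \<noteq> \<infinity>" for w
    using npC[of w] that unfolding H_def by (cases "conjugate f w") auto
  have Bpos: "(\<Sum>k\<le>t. \<beta> k) > 0" for t using \<beta>_pos by (intro sum_pos) auto
  have XB: "g (xbar (Suc t)) = ereal (G (xbar (Suc t))) \<and> (\<forall>w b. g w = ereal b \<longrightarrow>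
      \<eta> t * G (xbar (Suc t)) + (norm (xbar (Suc t) - (x t - \<eta> t *\<^sub>R (transpose A *v y t))))\<^sup>2 / 2
        + (1 + \<eta> t * \<mu>) / 2 * (norm (w - xbar (Suc t)))\<^sup>2
      \<le> \<eta> t * b + (norm (w - (x t - \<eta> t *\<^sub>R (transpose A *v y t))))\<^sup>2 / 2)" for t
  proof -
    obtain a where "g (xbar (Suc t)) = ereal a \<and> (\<forall>w b. g w = ereal b \<longrightarrow>
      \<eta> t * a + (norm (xbar (Suc t) - (x t - \<eta> t *\<^sub>R (transpose A *v y t))))\<^sup>2 / 2
        + (1 + \<eta> t * \<mu>) / 2 * (norm (w - xbar (Suc t)))\<^sup>2
      \<le> \<eta> t * b + (norm (w - (x t - \<eta> t *\<^sub>R (transpose A *v y t))))\<^sup>2 / 2)"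
      using prox_scaled[OF g_proper lsc_g g_strong \<mu>_nonneg \<eta>_pos[of t], of "x t - \<eta> t *\<^sub>R (transpose A *v y t)"]
      unfolding xbar_step[symmetric] by blast
    then show ?thesis unfolding G_def by simp
  qed
  have XX: "g (x (Suc t)) = ereal (G (x (Suc t))) \<and> (\<forall>w b. g w = ereal b \<longrightarrow>
      (\<Sum>k\<le>t. \<beta> k) * G (x (Suc t))
        + (norm (x (Suc t) - (x 0 - (\<Sum>k\<le>t. \<beta> k *\<^sub>R (transpose A *v y (Suc k))))))\<^sup>2 / 2
        + (1 + (\<Sum>k\<le>t. \<beta> k) * \<mu>) / 2 * (norm (w - x (Suc t)))\<^sup>2
      \<le> (\<Sum>k\<le>t. \<beta> k) * b + (norm (w - (x 0 - (\<Sum>k\<le>t. \<beta> k *\<^sub>R (transpose A *v y (Suc k))))))\<^sup>2 / 2)" for t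
  proof -
    obtain a where "g (x (Suc t)) = ereal a \<and> (\<forall>w b. g w = ereal b \<longrightarrow>
      (\<Sum>k\<le>t. \<beta> k) * a
        + (norm (x (Suc t) - (x 0 - (\<Sum>k\<le>t. \<beta> k *\<^sub>R (transpose A *v y (Suc k))))))\<^sup>2 / 2
        + (1 + (\<Sum>k\<le>t. \<beta> k) * \<mu>) / 2 * (norm (w - x (Suc t)))\<^sup>2
      \<le> (\<Sum>k\<le>t. \<beta> k) * b + (norm (w - (x 0 - (\<Sum>k\<le>t. \<beta> k *\<^sub>R (transpose A *v y (Suc k))))))\<^sup>2 / 2)"
      using prox_scaled[OF g_proper lsc_g g_strong \<mu>_nonneg Bpos[of t], of "x 0 - (\<Sum>k\<le>t. \<beta> k *\<^sub>R (transpose A *v y (Suc k)))"]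
      unfolding x_step[symmetric] by blast
    then show ?thesis unfolding G_def by simp
  qed
  have YY: "conjugate f (y (Suc t)) = ereal (H (y (Suc t))) \<and> (\<forall>w b. conjugate f w = ereal b \<longrightarrow>
      \<tau> t * H (y (Suc t)) + (norm (y (Suc t) - (y t + \<tau> t *\<^sub>R (A *v xbar (Suc t)))))\<^sup>2 / 2
        + (1 + \<tau> t * \<gamma>) / 2 * (norm (w - y (Suc t)))\<^sup>2
      \<le> \<tau> t * b + (norm (w - (y t + \<tau> t *\<^sub>R (A *v xbar (Suc t)))))\<^sup>2 / 2)" for t
  proof -
    obtain a where "conjugate f (y (Suc t)) = ereal a \<and> (\<forall>w b. conjugate f w = ereal b \<longrightarrow>
      \<tau> t * a + (norm (y (Suc t) - (y t + \<tau> t *\<^sub>R (A *v xbar (Suc t)))))\<^sup>2 / 2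
        + (1 + \<tau> t * \<gamma>) / 2 * (norm (w - y (Suc t)))\<^sup>2
      \<le> \<tau> t * b + (norm (w - (y t + \<tau> t *\<^sub>R (A *v xbar (Suc t)))))\<^sup>2 / 2)"
      using prox_scaled[OF prC lscC scC \<gamma>_nonneg \<tau>_pos[of t], of "y t + \<tau> t *\<^sub>R (A *v xbar (Suc t))"]
      unfolding y_step[symmetric] by blast
    then show ?thesis unfolding H_def by simp
  qed
  define W where "W = (\<Sum>t<T. \<beta> t)"
  have W: "W > 0" unfolding W_def using T_pos \<beta>_pos by (intro sum_pos) (auto simp: lessThan_empty_iff)
  define xh where "xh = (1 / W) *\<^sub>R (\<Sum>t<T. \<beta> t *\<^sub>R xbar (Suc t))"
  define yh where "yh = (1 / W) *\<^sub>R (\<Sum>t<T. \<beta> t *\<^sub>R y (Suc t))"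
  obtain z1 where z1: "g xh = ereal z1" "z1 \<le> (\<Sum>t<T. \<beta> t * G (xbar (Suc t))) / W"
    using jensen_ereal[where h=g and \<beta>=\<beta> and T=T and p="\<lambda>t. xbar (Suc t)" and hr="\<lambda>t. G (xbar (Suc t))",
        OF g_convex npg T_pos \<beta>_pos] XB
    unfolding xh_def W_def by blast
  obtain z2 where z2: "conjugate f yh = ereal z2" "z2 \<le> (\<Sum>t<T. \<beta> t * H (y (Suc t))) / W"
    using jensen_ereal[where h="conjugate f" and \<beta>=\<beta> and T=T and p="\<lambda>t. y (Suc t)" and hr="\<lambda>t. H (y (Suc t))",
        OF cvC npC T_pos \<beta>_pos] YY
    unfolding yh_def W_def by blast
  have lin1: "v \<bullet> (A *v xh) = (\<Sum>t<T. \<beta> t * (v \<bullet> (A *v xbar (Suc t)))) / W"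
  proof -
    have "v \<bullet> (A *v xh) = (transpose A *v v) \<bullet> xh" by (rule transpose_inner[symmetric])
    also have "\<dots> = (\<Sum>t<T. \<beta> t * ((transpose A *v v) \<bullet> xbar (Suc t))) / W"
      unfolding xh_def by (simp add: inner_sum_right)
    finally show ?thesis by (simp add: transpose_inner dot_lmul_matrix)
  qed
  have lin2: "yh \<bullet> (A *v u) = (\<Sum>t<T. \<beta> t * (y (Suc t) \<bullet> (A *v u))) / W"
    unfolding yh_def by (simp add: inner_sum_left)
  show ?thesis
    unfolding saddleF_def W_def[symmetric] xh_def[symmetric] yh_def[symmetric]
  proof (cases "conjugate f v = \<infinity> \<or> g u = \<infinity>")
    case True
    then show "g xh + ereal (v \<bullet> (A *v xh)) - conjugate f v - (g u + ereal (yh \<bullet> (A *v u)) - conjugate f yh)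
        \<le> ereal (1 / W * (\<beta> 0 / (2 * \<tau> 0) * (norm (y 0 - v))\<^sup>2 + 1 / 2 * (norm (x 0 - u))\<^sup>2))"
      using z1 z2 npg[of u] npC[of v] by (cases "g u"; cases "conjugate f v") auto
  next
    case False
    then have gu: "g u = ereal (G u)" and hv: "conjugate f v = ereal (H v)" using Gfin Hfin by auto
    have MR: "(\<Sum>t<T. \<beta> t * ((G (xbar (Suc t)) + v \<bullet> (A *v xbar (Suc t)) - H v)
            - (G u + y (Suc t) \<bullet> (A *v u) - H (y (Suc t)))))
         \<le> \<beta> 0 / (2 * \<tau> 0) * (norm (y 0 - v))\<^sup>2 + 1 / 2 * (norm (x 0 - u))\<^sup>2"
    proof (rule main_real[where D = "\<lambda>w. g w \<noteq> \<infinity>"])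
      show "\<And>t. 0 < \<beta> t" "\<And>t. 0 < \<eta> t" "\<And>t. 0 < \<tau> t" by (fact \<beta>_pos \<eta>_pos \<tau>_pos)+
      show "0 \<le> \<mu>" "0 \<le> \<gamma>" by (fact \<mu>_nonneg \<gamma>_nonneg)+
      show "\<And>t. t < T \<Longrightarrow> \<beta> t \<le> \<eta> t * (1 + (\<Sum>k<t. \<beta> k) * \<mu>)" by (fact step1)
      show "\<And>t. t < T \<Longrightarrow> \<eta> t * \<tau> t * (onorm (\<lambda>z. A *v z))\<^sup>2 \<le> 1" by (fact step2)
      show "\<And>t. t < T \<Longrightarrow> \<beta> (Suc t) / \<tau> (Suc t) \<le> \<beta> t / \<tau> t * (1 + \<gamma> * \<tau> t)" by (fact step3)
      show "g u \<noteq> \<infinity>" using gu by simp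
      show "\<And>t. g (x (Suc t)) \<noteq> \<infinity>" using XX by simp
      show "\<And>t w. g w \<noteq> \<infinity> \<Longrightarrow> (\<Sum>k\<le>t. \<beta> k) * G (x (Suc t))
        + (norm (x (Suc t) - (x 0 - (\<Sum>k\<le>t. \<beta> k *\<^sub>R (transpose A *v y (Suc k))))))\<^sup>2 / 2
        + (1 + (\<Sum>k\<le>t. \<beta> k) * \<mu>) / 2 * (norm (w - x (Suc t)))\<^sup>2
        \<le> (\<Sum>k\<le>t. \<beta> k) * G w + (norm (w - (x 0 - (\<Sum>k\<le>t. \<beta> k *\<^sub>R (transpose A *v y (Suc k))))))\<^sup>2 / 2"
        using XX Gfin by blast
      show "\<And>t. \<eta> t * G (xbar (Suc t)) + (norm (xbar (Suc t) - (x t - \<eta> t *\<^sub>R (transpose A *v y t))))\<^sup>2 / 2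
        + (1 + \<eta> t * \<mu>) / 2 * (norm (x (Suc t) - xbar (Suc t)))\<^sup>2
        \<le> \<eta> t * G (x (Suc t)) + (norm (x (Suc t) - (x t - \<eta> t *\<^sub>R (transpose A *v y t))))\<^sup>2 / 2"
        using XB XX by blast
      show "\<And>t. \<tau> t * H (y (Suc t)) + (norm (y (Suc t) - (y t + \<tau> t *\<^sub>R (A *v xbar (Suc t)))))\<^sup>2 / 2
        + (1 + \<tau> t * \<gamma>) / 2 * (norm (v - y (Suc t)))\<^sup>2
        \<le> \<tau> t * H v + (norm (v - (y t + \<tau> t *\<^sub>R (A *v xbar (Suc t)))))\<^sup>2 / 2"
        using YY hv by blast
    qed
    define SG where "SG = (\<Sum>t<T. \<beta> t * G (xbar (Suc t)))"
    define SV where "SV = (\<Sum>t<T. \<beta> t * (v \<bullet> (A *v xbar (Suc t))))"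
    define SH where "SH = (\<Sum>t<T. \<beta> t * H (y (Suc t)))"
    define SU where "SU = (\<Sum>t<T. \<beta> t * (y (Suc t) \<bullet> (A *v u)))"
    define R0 where "R0 = \<beta> 0 / (2 * \<tau> 0) * (norm (y 0 - v))\<^sup>2 + 1 / 2 * (norm (x 0 - u))\<^sup>2"
    have "(\<Sum>t<T. \<beta> t * ((G (xbar (Suc t)) + v \<bullet> (A *v xbar (Suc t)) - H v)
            - (G u + y (Suc t) \<bullet> (A *v u) - H (y (Suc t)))))
        = (\<Sum>t<T. \<beta> t * G (xbar (Suc t)) + \<beta> t * (v \<bullet> (A *v xbar (Suc t))) + \<beta> t * H (y (Suc t))
              - \<beta> t * (y (Suc t) \<bullet> (A *v u)) - \<beta> t * (H v + G u))"
      by (rule sum.cong) (simp_all add: algebra_simps)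
    also have "\<dots> = SG + SV + SH - SU - W * (H v + G u)"
      unfolding SG_def SV_def SH_def SU_def W_def by (simp add: sum.distrib sum_subtractf sum_distrib_right)
    finally have "SG + SV + SH - SU - W * (H v + G u) \<le> R0" using MR unfolding R0_def by simp
    then have "(SG + SV + SH - SU - W * (H v + G u)) / W \<le> R0 / W" using W by (intro divide_right_mono) auto
    moreover have "(SG + SV + SH - SU - W * (H v + G u)) / W = SG / W + SV / W + SH / W - SU / W - (H v + G u)"
      using W by (simp add: field_simps)
    ultimately have fin: "z1 + SV / W - H v - (G u + SU / W - z2) \<le> 1 / W * R0"
      using z1(2) z2(2) unfolding SG_def SH_def by simp
    show "g xh + ereal (v \<bullet> (A *v xh)) - conjugate f v - (g u + ereal (yh \<bullet> (A *v u)) - conjugate f yh)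
        \<le> ereal (1 / W * (\<beta> 0 / (2 * \<tau> 0) * (norm (y 0 - v))\<^sup>2 + 1 / 2 * (norm (x 0 - u))\<^sup>2))"
      using fin unfolding z1(1) z2(1) gu hv lin1 lin2 SV_def[symmetric] SU_def[symmetric] R0_def[symmetric] by simp
  qed
qed

end
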